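(* Let $a\ge6$ and $n\ge1$ be integers, let $u\in\mathbb{C}$ with $\mathrm{Re}(u)\le0$ and $|\mathrm{Im}(u)|\le3\pi$, and let $L$ be a vertical line contained in the strip $0<\mathrm{Re}(z)<1$, oriented from $+i\infty$ to $-i\infty$. Define $$J_n(u)=\frac{n}{2i\pi}\int_L R_n(nz)\left(\frac{\pi}{\sin(n\pi z)}\right)^3e^{nuz}\,dz.$$ Then: (i) $$J_n(u)=\frac{(-1)^n n^2}{2i\pi}\,n!^{a-6}\int_L\left(z+\frac12\right)\frac{\Gamma(nz)^{a+3}\,\Gamma(n-nz+1)^3\,\Gamma(nz+2n+1)^3}{\Gamma(nz+n+1)^{a+3}}\,e^{nuz}\,dz;$$ (ii) $$S_n(1)=\mathrm{Re}\big(J_n(i\pi)\big).$$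
   Context: Fix an integer $a\ge6$. For complex $x$ and integer $m\ge0$, $(x)_m=x(x+1)\cdots(x+m-1)$. For an integer $n\ge1$, $$R_n(t)=n!^{a-6}\left(t+\frac n2\right)\frac{(t-n)_n^3\,(t+n+1)_n^3}{(t)_{n+1}^a},\qquad S_n(1)=\sum_{k=1}^{\infty}\frac12R_n''(k).$$ $\Gamma$ is Euler's Gamma function. *)

theory Defs
  imports "HOL-Analysis.Analysis"
begin

definition R :: "nat \<Rightarrow> nat \<Rightarrow> complex \<Rightarrow> complex" where
  "R a n t = (fact n) ^ (a - 6) * (t + of_nat n / 2)
     * (pochhammer (t - of_nat n) n) ^ 3 * (pochhammer (t + of_nat n + 1) n) ^ 3
     / (pochhammer t (n + 1)) ^ a"

definition Rr :: "nat \<Rightarrow> nat \<Rightarrow> real \<Rightarrow> real" where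
  "Rr a n t = (fact n) ^ (a - 6) * (t + real n / 2)
     * (pochhammer (t - real n) n) ^ 3 * (pochhammer (t + real n + 1) n) ^ 3
     / (pochhammer t (n + 1)) ^ a"

text \<open>Integral along the vertical line Re z = c, oriented from +i infinity to -i infinity,
  parametrised by z(y) = c - i y, y in R (so dz = -i dy).\<close>
definition vline_integral :: "real \<Rightarrow> (complex \<Rightarrow> complex) \<Rightarrow> complex" where
  "vline_integral c f = integral UNIV (\<lambda>y::real. f (Complex c (- y)) * (- \<i>))"

definition J_integrand :: "nat \<Rightarrow> nat \<Rightarrow> complex \<Rightarrow> complex \<Rightarrow> complex" where
  "J_integrand a n u z = R a n (of_nat n * z) * (of_real pi / sin (of_nat n * of_real pi * z)) ^ 3
      * exp (of_nat n * u * z)"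

definition J :: "nat \<Rightarrow> nat \<Rightarrow> real \<Rightarrow> complex \<Rightarrow> complex" where
  "J a n c u = of_nat n / (2 * \<i> * of_real pi) * vline_integral c (J_integrand a n u)"

end

theory Submission
  imports Defs "HOL-Complex_Analysis.Complex_Analysis" "HOL-Probability.Sinc_Integral" "HOL-Real_Asymp.Real_Asymp"
begin

lemma poch_nz:
  fixes t :: complex assumes "0 < Re t" shows "pochhammer t m \<noteq> 0"
proof
  assume "pochhammer t m = 0"
  then obtain k where "t = - of_nat k" by (auto simp: pochhammer_eq_0_iff)
  with assms show False by simp
qed

lemma R_holo: "R a n holomorphic_on {t. 0 < Re t}"
  unfolding R_def by (intro holomorphic_intros) (auto dest: poch_nz)

lemma norm_poch_le:
  fixes z :: complex shows "norm (pochhammer z m) \<le> (norm z + of_nat m) ^ m"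
proof -
  have "norm (pochhammer z m) = (\<Prod>i<m. norm (z + of_nat i))"
    by (simp add: pochhammer_prod prod_norm atLeast0LessThan)
  also have "\<dots> \<le> (\<Prod>i<m. norm z + of_nat m)"
  proof (intro prod_mono conjI)
    fix i assume "i \<in> {..<m}"
    have "norm (z + of_nat i) \<le> norm z + norm (of_nat i :: complex)" by (rule norm_triangle_ineq)
    also have "\<dots> \<le> norm z + of_nat m" using \<open>i \<in> {..<m}\<close> by simp
    finally show "norm (z + of_nat i) \<le> norm z + of_nat m" .
  qed auto
  finally show ?thesis by simp
qed

lemma norm_shift_ge:
  fixes t :: complex assumes "0 \<le> Re t" "0 \<le> c" shows "norm t \<le> norm (t + of_real c)"
proof -
  have "(norm t)^2 \<le> (norm (t + of_real c))^2"
    unfolding cmod_power2 using assms by (simp add: power2_eq_square algebra_simps)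
  thus ?thesis using norm_ge_zero power2_le_imp_le by blast
qed

lemma norm_poch_ge:
  fixes t :: complex assumes "0 \<le> Re t" shows "norm t ^ m \<le> norm (pochhammer t m)"
proof -
  have "norm (pochhammer t m) = (\<Prod>i<m. norm (t + of_nat i))"
    by (simp add: pochhammer_prod prod_norm atLeast0LessThan)
  moreover have "(\<Prod>i<m. norm t) \<le> (\<Prod>i<m. norm (t + of_nat i))"
    using norm_shift_ge[OF assms, of "real _"] by (intro prod_mono) auto
  ultimately show ?thesis by simp
qed

lemma R_bound:
  assumes "0 < x0" "6 \<le> a"
  shows "\<exists>D>0. \<forall>t. x0 \<le> Re t \<longrightarrow> norm (R a n t) \<le> D / norm t ^ 2"
proof -
  define A :: real where "A = fact n ^ (a - 6)"
  define \<beta> :: real where "\<beta> = 1 + (3 * n + 1) / x0"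
  define m where "m = a * (n + 1) - (6 * n + 1)"
  define \<mu> where "\<mu> = min 1 x0"
  have "a * (n+1) \<ge> 6 * (n+1)" using assms(2) by (rule mult_le_mono1)
  hence m5: "m \<ge> 5" unfolding m_def by (simp add: algebra_simps)
  define D where "D = A * \<beta> ^ (6*n+1) / \<mu> ^ (m - 2)"
  have x0: "0 < \<mu>" "\<mu> \<le> x0" using assms by (auto simp: \<mu>_def)
  have Apos: "A > 0" unfolding A_def by simp
  have \<beta>1: "\<beta> \<ge> 1" unfolding \<beta>_def using assms by simp
  have "D > 0" unfolding D_def using Apos \<beta>1 x0 by simp
  moreover have "norm (R a n t) \<le> D / norm t ^ 2" if t: "x0 \<le> Re t" for t
  proof -
    define nt where "nt = norm t"
    have ntx: "x0 \<le> nt" using t complex_Re_le_cmod[of t] unfolding nt_def by linarith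
    hence ntpos: "nt > 0" using assms by linarith
    have keyb: "nt + (3*n+1) \<le> \<beta> * nt"
    proof -
      have "(3*n+1) / x0 * x0 \<le> (3*n+1) / x0 * nt" using ntx assms(1)
        by (intro mult_left_mono) auto
      hence "(3*n+1) \<le> (3*n+1) / x0 * nt" using assms(1) by simp
      thus ?thesis unfolding \<beta>_def by (simp add: algebra_simps)
    qed
    have b1: "norm (t + of_nat n / 2) \<le> \<beta> * nt"
    proof -
      have "norm (t + of_nat n / 2) \<le> nt + n / 2" unfolding nt_def
        using norm_triangle_ineq[of t "of_nat n / 2"] by (simp add: norm_divide)
      thus ?thesis using keyb by linarith
    qed
    have b2: "norm (pochhammer (t - of_nat n) n) \<le> (\<beta> * nt) ^ n"
    proof -
      have "norm (t - of_nat n) \<le> nt + n" unfolding nt_def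
        using norm_triangle_ineq4[of t "of_nat n"] by simp
      hence "norm (t - of_nat n) + n \<le> \<beta> * nt" using keyb by linarith
      thus ?thesis using norm_poch_le[of "t - of_nat n" n]
        by (meson norm_ge_zero order_trans power_mono add_nonneg_nonneg of_nat_0_le_iff)
    qed
    have b3: "norm (pochhammer (t + of_nat n + 1) n) \<le> (\<beta> * nt) ^ n"
    proof -
      have "norm (t + of_nat n + 1) \<le> nt + n + 1" unfolding nt_def
        using norm_triangle_ineq[of t "of_nat (n + 1)"] norm_of_nat[of "n+1", where 'a=complex]
        by (simp only: add.assoc of_nat_add of_nat_1 of_nat_Suc)
      hence "norm (t + of_nat n + 1) + n \<le> \<beta> * nt" using keyb by linarith
      thus ?thesis using norm_poch_le[of "t + of_nat n + 1" n]
        by (meson norm_ge_zero order_trans power_mono add_nonneg_nonneg of_nat_0_le_iff)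
    qed
    have b4: "nt ^ (n+1) \<le> norm (pochhammer t (n+1))"
      using norm_poch_ge[of t "n+1"] t assms(1) unfolding nt_def by simp
    have num: "norm (of_real (fact n ^ (a-6)) * (t + of_nat n / 2) * pochhammer (t - of_nat n) n ^ 3
          * pochhammer (t + of_nat n + 1) n ^ 3) \<le> A * (\<beta> * nt) * ((\<beta> * nt) ^ n) ^ 3 * ((\<beta> * nt) ^ n) ^ 3"
      unfolding norm_mult norm_power A_def
      by (intro mult_mono power_mono b1 b2 b3) (use ntpos \<beta>1 in \<open>auto simp: norm_power\<close>)
    have den: "(nt ^ (n+1)) ^ a \<le> norm (pochhammer t (n+1) ^ a)"
      unfolding norm_power by (intro power_mono b4) (use ntpos in auto)
    have Rform: "R a n t = of_real (fact n ^ (a-6)) * (t + of_nat n / 2) * pochhammer (t - of_nat n) n ^ 3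
          * pochhammer (t + of_nat n + 1) n ^ 3 / pochhammer t (n+1) ^ a"
      unfolding R_def by simp
    have "norm (R a n t) \<le> A * (\<beta> * nt) * ((\<beta> * nt) ^ n) ^ 3 * ((\<beta> * nt) ^ n) ^ 3 / (nt ^ (n+1)) ^ a"
      unfolding Rform norm_divide
      by (rule frac_le[OF _ num _ den]) (use ntpos Apos \<beta>1 in auto)
    also have "\<dots> = A * \<beta> ^ (6*n+1) * nt ^ (6*n+1) / nt ^ (a*(n+1))"
      by (simp add: power_mult_distrib power_mult[symmetric] power_add[symmetric] algebra_simps)
    also have "nt ^ (a*(n+1)) = nt ^ (6*n+1) * (nt^2 * nt ^ (m-2))"
    proof -
      have "a*(n+1) = (6*n+1) + (2 + (m-2))" using m5 unfolding m_def by simp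
      thus ?thesis by (simp only: power_add)
    qed
    also have "A * \<beta> ^ (6*n+1) * nt ^ (6*n+1) / (nt ^ (6*n+1) * (nt^2 * nt ^ (m-2)))
        = A * \<beta> ^ (6*n+1) / (nt^2 * nt ^ (m-2))" using ntpos by simp
    also have "\<dots> \<le> A * \<beta> ^ (6*n+1) / (nt^2 * \<mu> ^ (m-2))"
      using Apos \<beta>1 ntpos x0 ntx
      by (intro divide_left_mono mult_left_mono power_mono) auto
    also have "\<dots> = D / norm t ^ 2" unfolding D_def nt_def by simp
    finally show ?thesis .
  qed
  ultimately show ?thesis by blast
qed

definition gf :: "nat \<Rightarrow> nat \<Rightarrow> complex \<Rightarrow> complex \<Rightarrow> complex" where
  "gf a n u t = R a n t * (of_real pi / sin (of_real pi * t)) ^ 3 * exp (u * t)"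

definition Z1 :: "nat \<Rightarrow> complex set" where "Z1 n = of_nat ` {1..n}"

definition Fx :: "nat \<Rightarrow> nat \<Rightarrow> complex \<Rightarrow> complex \<Rightarrow> complex" where
  "Fx a n u t = (if t \<in> Z1 n then Lim (at t) (gf a n u) else gf a n u t)"

lemma J_integrand_eq: "J_integrand a n u z = gf a n u (of_nat n * z)"
  unfolding J_integrand_def gf_def by (simp add: mult_ac)

lemma sin_pi_nz: assumes "(t::complex) \<notin> \<int>" shows "sin (of_real pi * t) \<noteq> 0"
proof
  assume "sin (of_real pi * t) = 0"
  then obtain m :: int where "of_real pi * t = of_real (m * pi)" by (auto simp: sin_eq_0)
  hence "t = of_int m" by (simp add: field_simps)
  with assms show False by auto
qed

lemma gf_holo: "gf a n u holomorphic_on {t. 0 < Re t} - \<int>"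
proof -
  have "R a n holomorphic_on {t. 0 < Re t} - \<int>" by (rule holomorphic_on_subset[OF R_holo]) auto
  thus ?thesis unfolding gf_def by (intro holomorphic_intros) (auto dest: sin_pi_nz)
qed

lemma sin_quot_lim:
  "((\<lambda>t::complex. (t - of_nat k) / sin (of_real pi * t)) \<longlongrightarrow> (-1) ^ k / of_real pi) (at (of_nat k))"
proof -
  have d: "((\<lambda>t::complex. sin (of_real pi * t)) has_field_derivative (of_real pi * cos (of_real pi * of_nat k))) (at (of_nat k))"
    by (auto intro!: derivative_eq_intros)
  have c: "cos (of_real pi * (of_nat k :: complex)) = (-1) ^ k"
    using cos_npi_complex'[of k] by (simp add: mult.commute)
  have s: "sin (of_real pi * (of_nat k :: complex)) = 0"
    using sin_npi_complex'[of k] by (simp add: mult.commute)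
  from d have "((\<lambda>t::complex. (sin (of_real pi * t) - sin (of_real pi * of_nat k)) / (t - of_nat k)) \<longlongrightarrow> of_real pi * (-1) ^ k) (at (of_nat k))"
    unfolding has_field_derivative_iff c .
  hence "((\<lambda>t::complex. inverse (sin (of_real pi * t) / (t - of_nat k))) \<longlongrightarrow> inverse (of_real pi * (-1) ^ k)) (at (of_nat k))"
    unfolding s by (intro tendsto_inverse) auto
  moreover have "inverse (of_real pi * (-1) ^ k) = ((-1) ^ k / of_real pi :: complex)"
    by (simp add: field_simps power_minus_odd)
  ultimately show ?thesis by (simp add: inverse_eq_divide)
qed

lemma R_factor:
  assumes "1 \<le> k" "k \<le> n"
  obtains r where "r holomorphic_on {t. 0 < Re t}" "\<And>t. R a n t = (t - of_nat k) ^ 3 * r t"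
proof -
  define P where "P t = (\<Prod>i\<in>{..<n}-{n-k}. t - of_nat n + of_nat i)" for t :: complex
  have pe: "pochhammer (t - of_nat n) n = (t - of_nat k) * P t" for t
  proof -
    have "pochhammer (t - of_nat n) n = (\<Prod>i\<in>{..<n}. t - of_nat n + of_nat i)"
      by (simp add: pochhammer_prod atLeast0LessThan)
    also have "\<dots> = (t - of_nat n + of_nat (n - k)) * P t"
      unfolding P_def using assms by (intro prod.remove) auto
    also have "t - of_nat n + of_nat (n - k) = t - of_nat k" using assms by (simp add: of_nat_diff)
    finally show ?thesis .
  qed
  define r where "r t = (fact n) ^ (a - 6) * (t + of_nat n / 2) * P t ^ 3
      * (pochhammer (t + of_nat n + 1) n) ^ 3 / (pochhammer t (n + 1)) ^ a" for t :: complex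
  have "r holomorphic_on {t. 0 < Re t}"
    unfolding r_def P_def by (intro holomorphic_intros) (auto dest: poch_nz)
  moreover have "R a n t = (t - of_nat k) ^ 3 * r t" for t
    unfolding R_def r_def pe by (simp add: power_mult_distrib)
  ultimately show ?thesis using that by blast
qed

lemma gf_lim:
  assumes "k \<in> {1..n}"
  shows "\<exists>L. (gf a n u \<longlongrightarrow> L) (at (of_nat k))"
proof -
  obtain r where r: "r holomorphic_on {t. 0 < Re t}" "\<And>t. R a n t = (t - of_nat k) ^ 3 * r t"
    using R_factor[of k n a] assms by auto
  have eq: "gf a n u t = r t * (of_real pi * ((t - of_nat k) / sin (of_real pi * t))) ^ 3 * exp (u * t)" for t
  proof (cases "sin (of_real pi * t) = 0")
    case True thus ?thesis by (simp add: gf_def)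
  next
    case False thus ?thesis by (simp add: gf_def r(2) power_mult_distrib power_divide ac_simps)
  qed
  have o: "open {t::complex. 0 < Re t}" by (simp add: open_halfspace_Re_gt)
  have "isCont r (of_nat k)"
    using holomorphic_on_imp_continuous_on[OF r(1)] o assms
    by (simp add: continuous_on_eq_continuous_at)
  hence "((\<lambda>t. r t * (of_real pi * ((t - of_nat k) / sin (of_real pi * t))) ^ 3 * exp (u * t))
      \<longlongrightarrow> r (of_nat k) * (of_real pi * ((-1) ^ k / of_real pi)) ^ 3 * exp (u * of_nat k)) (at (of_nat k))"
    by (intro tendsto_intros sin_quot_lim) (auto simp: isCont_def)
  thus ?thesis unfolding eq[abs_def] by blast
qed

lemma nat_dist_ge1:
  assumes "j \<noteq> k" shows "1 \<le> norm (of_nat j - of_nat k :: complex)"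
proof -
  have "of_nat j - of_nat k = (of_int (int j - int k) :: complex)" by simp
  hence "norm (of_nat j - of_nat k :: complex) = \<bar>of_int (int j - int k)\<bar>"
    by (simp only: norm_of_int)
  thus ?thesis using assms by linarith
qed

lemma Fx_tendsto:
  assumes "z \<in> Z1 n"
  shows "(Fx a n u \<longlongrightarrow> Fx a n u z) (at z)"
proof -
  obtain k where k: "k \<in> {1..n}" "z = of_nat k" using assms by (auto simp: Z1_def)
  obtain L where L: "(gf a n u \<longlongrightarrow> L) (at z)" using gf_lim[OF k(1)] k(2) by blast
  have FL: "Fx a n u z = L" using assms L by (simp add: Fx_def tendsto_Lim)
  have ev: "eventually (\<lambda>t. gf a n u t = Fx a n u t) (at z)"
    unfolding eventually_at
  proof (intro exI[of _ 1] conjI ballI impI)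
    fix t assume t: "t \<noteq> z \<and> dist t z < 1"
    have "t \<notin> Z1 n"
    proof
      assume "t \<in> Z1 n"
      then obtain j where "t = of_nat j" by (auto simp: Z1_def)
      with t k have "j \<noteq> k" "norm (of_nat j - of_nat k :: complex) < 1" by (auto simp: dist_norm)
      with nat_dist_ge1 show False by fastforce
    qed
    thus "gf a n u t = Fx a n u t" by (simp add: Fx_def)
  qed simp
  show ?thesis unfolding FL by (rule Lim_transform_eventually[OF L ev])
qed

lemma int_in_strip:
  assumes "(t::complex) \<in> \<int>" "0 < Re t" "Re t < of_nat N + 1"
  shows "\<exists>j\<in>{1..N}. t = of_nat j"
proof -
  obtain m where m: "t = of_int m" using assms(1) by (auto elim: Ints_cases)
  have "0 < m" "m < int N + 1" using assms m by auto
  hence "nat m \<in> {1..N}" "t = of_nat (nat m)" using m by auto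
  thus ?thesis by blast
qed

lemma Fx_holo:
  "Fx a n u holomorphic_on ({t. 0 < Re t \<and> Re t < of_nat N + 1} - of_nat ` {n+1..N})"
proof (rule no_isolated_singularity'[where K = "Z1 n"])
  show "open ({t. 0 < Re t \<and> Re t < of_nat N + 1} - of_nat ` {n+1..N})"
    by (intro open_Diff finite_imp_closed)
       (auto simp: Collect_conj_eq intro!: open_Int open_halfspace_Re_gt open_halfspace_Re_lt)
  show "finite (Z1 n)" by (simp add: Z1_def)
  show "(Fx a n u \<longlongrightarrow> Fx a n u z) (at z within ({t. 0 < Re t \<and> Re t < of_nat N + 1} - of_nat ` {n+1..N}))"
    if "z \<in> Z1 n" for z
    using Fx_tendsto[OF that] by (rule tendsto_within_subset) simp
  have sub: "{t. 0 < Re t \<and> Re t < of_nat N + 1} - of_nat ` {n+1..N} - Z1 n \<subseteq> {t. 0 < Re t} - \<int>"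
  proof
    fix t assume t: "t \<in> {t. 0 < Re t \<and> Re t < of_nat N + 1} - of_nat ` {n+1..N} - Z1 n"
    show "t \<in> {t. 0 < Re t} - \<int>"
    proof (cases "t \<in> \<int>")
      case True
      then obtain j where j: "j \<in> {1..N}" "t = of_nat j" using int_in_strip[of t N] t by auto
      show ?thesis
      proof (cases "j \<le> n")
        case True thus ?thesis using t j by (auto simp: Z1_def)
      next
        case False thus ?thesis using t j by auto
      qed
    qed (use t in auto)
  qed
  have "gf a n u holomorphic_on ({t. 0 < Re t \<and> Re t < of_nat N + 1} - of_nat ` {n+1..N} - Z1 n)"
    by (rule holomorphic_on_subset[OF gf_holo sub])
  thus "Fx a n u holomorphic_on ({t. 0 < Re t \<and> Re t < of_nat N + 1} - of_nat ` {n+1..N} - Z1 n)"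
    by (rule holomorphic_cong[THEN iffD1, rotated 2]) (auto simp: Fx_def)
qed

lemma norm_sin_ge_aux:
  fixes z :: complex
  defines "E \<equiv> exp \<bar>Im z\<bar>"
  shows "(E - inverse E)^2 / 4 \<le> norm (sin z) ^ 2"
proof -
  have e: "exp (2 * Im z) + inverse (exp (2 * Im z)) = E^2 + inverse E ^ 2"
  proof (cases "Im z \<ge> 0")
    case True
    hence "E = exp (Im z)" unfolding E_def by simp
    moreover have "exp (2 * Im z) = exp (Im z) ^ 2" using exp_of_nat_mult[of 2 "Im z"] by simp
    ultimately show ?thesis by (simp add: power_inverse)
  next
    case False
    hence "E = exp (- Im z)" unfolding E_def by simp
    moreover have "exp (2 * Im z) = exp (Im z) ^ 2" using exp_of_nat_mult[of 2 "Im z"] by simp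
    ultimately show ?thesis by (simp add: power_inverse exp_minus)
  qed
  have "cos (2 * Re z) \<le> 1" by simp
  moreover have Epos: "E > 0" unfolding E_def by simp
  ultimately have "(E - inverse E)^2 / 4 \<le> (exp (2 * Im z) + inverse (exp (2 * Im z)) - 2 * cos (2 * Re z)) / 4"
    unfolding e by (simp add: power2_eq_square field_simps)
  thus ?thesis by (simp add: norm_sin_squared)
qed

lemma norm_sin_lower:
  fixes z :: complex
  assumes "pi \<le> \<bar>Im z\<bar>"
  shows "exp \<bar>Im z\<bar> / 3 \<le> norm (sin z)"
proof -
  define E where "E = exp \<bar>Im z\<bar>"
  have "exp pi \<ge> 1 + pi" by (rule exp_ge_add_one_self)
  hence "E \<ge> 1 + pi" unfolding E_def using assms by (meson exp_le_cancel_iff order_trans)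
  hence E3: "E \<ge> 3" using pi_gt3 by linarith
  have "inverse E \<le> inverse 3" by (rule le_imp_inverse_le) (use E3 in auto)
  hence "inverse E \<le> 1/3" by simp
  hence "2 * E / 3 \<le> E - inverse E" using E3 by linarith
  hence "(2 * E / 3)^2 \<le> (E - inverse E)^2" using E3 by (intro power_mono) auto
  hence "(E/3)^2 \<le> (E - inverse E)^2 / 4" by (simp add: power2_eq_square field_simps)
  hence "(E/3)^2 \<le> norm (sin z)^2" using norm_sin_ge_aux[of z] unfolding E_def[symmetric] by linarith
  hence "E/3 \<le> norm (sin z)" by (rule power2_le_imp_le) simp
  thus ?thesis unfolding E_def .
qed

lemma K_bound:
  fixes t u :: complex
  assumes "0 \<le> Re t" "1 \<le> \<bar>Im t\<bar>" "Re u \<le> 0" "\<bar>Im u\<bar> \<le> 3 * pi"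
  shows "norm ((of_real pi / sin (of_real pi * t)) ^ 3 * exp (u * t)) \<le> 27 * pi ^ 3"
proof -
  define E where "E = exp (pi * \<bar>Im t\<bar>)"
  have Epos: "E > 0" unfolding E_def by simp
  have imz: "\<bar>Im (of_real pi * t)\<bar> = pi * \<bar>Im t\<bar>" by (simp add: abs_mult)
  have "pi \<le> pi * \<bar>Im t\<bar>" using assms(2) by simp
  hence s: "E / 3 \<le> norm (sin (of_real pi * t))"
    using norm_sin_lower[of "of_real pi * t"] unfolding imz E_def by simp
  have "Re (u * t) \<le> 3 * pi * \<bar>Im t\<bar>"
  proof -
    have "Re (u * t) = Re u * Re t - Im u * Im t" by simp
    also have "\<dots> \<le> - Im u * Im t" using assms(1,3) by (simp add: mult_nonpos_nonneg)
    also have "\<dots> \<le> \<bar>Im u\<bar> * \<bar>Im t\<bar>" by (metis abs_ge_self abs_minus_cancel abs_mult minus_mult_left)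
    also have "\<dots> \<le> 3 * pi * \<bar>Im t\<bar>" using assms(4) by (simp add: mult_right_mono)
    finally show ?thesis .
  qed
  hence ex: "norm (exp (u * t)) \<le> E ^ 3" unfolding E_def
    by (simp add: exp_of_nat_mult[symmetric] mult_ac)
  have "norm ((of_real pi / sin (of_real pi * t)) ^ 3 * exp (u * t))
      = pi ^ 3 / norm (sin (of_real pi * t)) ^ 3 * norm (exp (u * t))"
    by (simp add: norm_mult norm_power norm_divide power_divide)
  also have "\<dots> \<le> pi ^ 3 / (E/3) ^ 3 * E ^ 3"
    using s ex Epos by (intro mult_mono divide_left_mono power_mono) (auto intro!: mult_pos_pos)
  also have "\<dots> = 27 * pi ^ 3" using Epos by (simp add: field_simps)
  finally show ?thesis .
qed

lemma K_bound_right: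
  fixes t :: complex
  assumes "Re t = of_nat N + 1/2"
  shows "norm ((of_real pi / sin (of_real pi * t)) ^ 3 * exp (\<i> * of_real pi * t)) \<le> 2 * pi ^ 3"
proof -
  define y where "y = pi * Im t"
  define S where "S = norm (sin (of_real pi * t))"
  have c: "cos (2 * (pi * Re t)) = -1"
  proof -
    have "2 * (pi * Re t) = real (2*N) * pi + pi" using assms by (simp add: algebra_simps)
    moreover have "cos (real (2*N) * pi) = 1" by (simp only: cos_npi) simp
    ultimately show ?thesis by (simp add: cos_add)
  qed
  have sq0: "S ^ 2 = (exp (2*y) + inverse (exp (2*y)) - 2 * cos (2 * (pi * Re t))) / 4"
    unfolding S_def y_def by (simp add: norm_sin_squared)
  have sq: "S ^ 2 = (exp (2*y) + inverse (exp (2*y)) + 2) / 4" unfolding sq0 c by simp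
  have e2: "exp (2*y) = exp y ^ 2"
    using exp_of_nat_mult[of 2 y] by simp
  have i2: "inverse (exp (2*y)) = inverse (exp y) ^ 2"
    unfolding e2 by (rule power_inverse[symmetric])
  have "0 \<le> (exp y - inverse (exp y))^2" by simp
  also have "(exp y - inverse (exp y))^2 = exp y ^ 2 + inverse (exp y) ^ 2 - 2"
    by (simp add: power2_eq_square algebra_simps)
  finally have "2 \<le> exp (2*y) + inverse (exp (2*y))" using i2 e2 by linarith
  hence "1 ^ 2 \<le> S ^ 2" using sq by simp
  hence s1: "1 \<le> S" unfolding S_def using power2_le_imp_le norm_ge_zero by blast
  have "(inverse (exp y) / 2)^2 = inverse (exp y) ^ 2 / 4" by (simp add: power_divide)
  also have "\<dots> \<le> S ^ 2" unfolding sq i2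
    by (intro divide_right_mono) (use exp_gt_zero[of "2*y"] in linarith, simp)
  finally have s2: "inverse (exp y) / 2 \<le> S" unfolding S_def using power2_le_imp_le norm_ge_zero by blast
  have "S ^ 1 \<le> S ^ 3" by (rule power_increasing) (use s1 in auto)
  hence s3: "inverse (exp y) / 2 \<le> S ^ 3" using s2 by simp
  have ex0: "norm (exp (\<i> * of_real pi * t)) = exp (- (pi * Im t))"
    by (simp add: norm_exp_eq_Re)
  have ex1: "exp (- (pi * Im t)) = inverse (exp y)" by (simp add: y_def exp_minus)
  have ex: "norm (exp (\<i> * of_real pi * t)) = inverse (exp y)" using ex0 ex1 by simp
  have "norm ((of_real pi / sin (of_real pi * t)) ^ 3 * exp (\<i> * of_real pi * t))
      = pi ^ 3 / S ^ 3 * inverse (exp y)"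
    unfolding S_def norm_mult ex norm_power norm_divide by (simp add: power_divide)
  also have "\<dots> \<le> pi ^ 3 / (inverse (exp y) / 2) * inverse (exp y)"
  proof -
    have "0 < S ^ 3" using s1 by simp
    thus ?thesis using s3 by (intro mult_right_mono divide_left_mono) auto
  qed
  also have "\<dots> = 2 * pi ^ 3" by simp
  finally show ?thesis .
qed

lemma inv1sq_integrable: "(\<lambda>x::real. inverse (1 + x^2)) integrable_on UNIV"
proof -
  have "einterval (-\<infinity>) \<infinity> = (UNIV :: real set)" by (auto simp: einterval_def)
  thus ?thesis using set_borel_integral_eq_integral(1)[OF integrable_inverse_1_plus_square] by simp
qed

lemma dom_int_limit:
  fixes f :: "real \<Rightarrow> complex"
  assumes cf: "continuous_on UNIV f" and h: "h integrable_on UNIV" and le: "\<And>x. norm (f x) \<le> h x"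
  shows "f integrable_on UNIV" "(\<lambda>M::nat. integral {-real M..real M} f) \<longlonglongrightarrow> integral UNIV f"
proof -
  define fM where "fM M x = (if x \<in> {-real M..real M} then f x else 0)" for M :: nat and x
  have i1: "fM M integrable_on UNIV" for M
    unfolding fM_def integrable_restrict_UNIV
    by (rule integrable_continuous_interval) (rule continuous_on_subset[OF cf], simp)
  have i2: "norm (fM M x) \<le> h x" for M x
    using le[of x] order_trans[OF norm_ge_zero le[of x]] by (auto simp: fM_def)
  have i3: "(\<lambda>M. fM M x) \<longlonglongrightarrow> f x" for x
  proof (rule Lim_transform_eventually[OF tendsto_const])
    show "\<forall>\<^sub>F M in sequentially. f x = fM M x"
      unfolding eventually_sequentially
    proof (intro exI[of _ "nat \<lceil>\<bar>x\<bar>\<rceil>"] allI impI)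
      fix M assume "nat \<lceil>\<bar>x\<bar>\<rceil> \<le> M"
      hence "\<bar>x\<bar> \<le> real M" by linarith
      thus "f x = fM M x" by (auto simp: fM_def)
    qed
  qed
  have *: "integral UNIV (fM M) = integral {-real M..real M} f" for M
    unfolding fM_def by (rule integral_restrict_UNIV)
  from dominated_convergence[OF i1 h i2 i3]
  show "f integrable_on UNIV" "(\<lambda>M::nat. integral {-real M..real M} f) \<longlonglongrightarrow> integral UNIV f"
    unfolding * by auto
qed

lemma stretch_UNIV:
  fixes f :: "real \<Rightarrow> complex"
  assumes cf: "continuous_on UNIV f" and le: "\<And>x. norm (f x) \<le> B * inverse (1 + x^2)"
    and n: "1 \<le> n"
  shows "(\<lambda>y. f (- real n * y)) integrable_on UNIV"
    "integral UNIV (\<lambda>y. f (- real n * y)) = integral UNIV f / of_nat n"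
proof -
  have B0: "0 \<le> B" using order_trans[OF norm_ge_zero le[of 0]] by simp
  have hi: "(\<lambda>x. B * inverse (1 + x^2)) integrable_on UNIV"
    using integrable_on_cmult_left[OF inv1sq_integrable, of B] by simp
  have cg: "continuous_on UNIV (\<lambda>y. f (- real n * y))"
    by (rule continuous_on_compose2[OF cf]) (auto intro!: continuous_intros)
  have leg: "norm (f (- real n * y)) \<le> B * inverse (1 + y^2)" for y
  proof -
    have e: "(- real n * y)^2 = real n ^ 2 * y^2" by (simp add: power_mult_distrib)
    have "1 \<le> real n ^ 2" using n by simp
    hence "1 * y^2 \<le> real n ^ 2 * y^2" by (intro mult_right_mono) auto
    hence "y^2 \<le> (- real n * y)^2" unfolding e by simp
    hence "inverse (1 + (- real n * y)^2) \<le> inverse (1 + y^2)"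
      by (intro le_imp_inverse_le) (auto intro: add_pos_nonneg)
    hence "B * inverse (1 + (- real n * y)^2) \<le> B * inverse (1 + y^2)"
      using B0 by (intro mult_left_mono)
    thus ?thesis using le[of "- real n * y"] by linarith
  qed
  note Lf = dom_int_limit[OF cf hi le]
  note Lg = dom_int_limit[OF cg hi leg]
  show "(\<lambda>y. f (- real n * y)) integrable_on UNIV" by (rule Lg(1))
  have eqM: "integral {-real M..real M} (\<lambda>y. f (- real n * y)) = integral {-real (n*M)..real (n*M)} f / of_nat n" for M
  proof -
    have fi: "(f has_integral integral {-real (n*M)..real (n*M)} f) {-real (n*M)..real (n*M)}"
      by (intro integrable_integral integrable_continuous_interval continuous_on_subset[OF cf]) auto
    have nz: "- real n \<noteq> 0" using n by simp
    have img: "(\<lambda>x. x / (- real n)) ` {-real (n*M)..real (n*M)} = {-real M..real M}"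
    proof
      show "(\<lambda>x. x / (- real n)) ` {-real (n*M)..real (n*M)} \<subseteq> {-real M..real M}"
        using n by (auto simp: field_simps)
      show "{-real M..real M} \<subseteq> (\<lambda>x. x / (- real n)) ` {-real (n*M)..real (n*M)}"
      proof
        fix x assume x: "x \<in> {-real M..real M}"
        have "x = (- real n * x) / (- real n)" using n by simp
        moreover have "- real n * x \<in> {-real (n*M)..real (n*M)}"
        proof -
          have "real n * x \<le> real n * real M" "real n * (- real M) \<le> real n * x"
            using x by (intro mult_left_mono; simp)+
          thus ?thesis by simp
        qed
        ultimately show "x \<in> (\<lambda>x. x / (- real n)) ` {-real (n*M)..real (n*M)}" by blast
      qed
    qed
    have "((\<lambda>y. f (- real n * y)) has_integral (1 / \<bar>- real n\<bar>) *\<^sub>R integral {-real (n*M)..real (n*M)} f) {-real M..real M}"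
      using has_integral_stretch_real[OF fi nz] unfolding img .
    thus ?thesis using n by (simp add: integral_unique scaleR_conv_of_real divide_inverse mult.commute)
  qed
  have sm: "strict_mono (\<lambda>M::nat. n * M)" using n by (auto simp: strict_mono_def)
  have "(\<lambda>M. integral {-real (n*M)..real (n*M)} f) \<longlonglongrightarrow> integral UNIV f"
    using LIMSEQ_subseq_LIMSEQ[OF Lf(2) sm] by (simp add: o_def)
  hence "(\<lambda>M. integral {-real M..real M} (\<lambda>y. f (- real n * y))) \<longlonglongrightarrow> integral UNIV f / of_nat n"
    unfolding eqM by (intro tendsto_intros) (use n in auto)
  thus "integral UNIV (\<lambda>y. f (- real n * y)) = integral UNIV f / of_nat n"
    using Lg(2) LIMSEQ_unique by blast
qed

lemma cont_Complex: "continuous_on UNIV (\<lambda>s. Complex x0 s)"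
proof -
  have "(\<lambda>s. Complex x0 s) = (\<lambda>s. of_real x0 + \<i> * of_real s)" by (auto simp: Complex_eq)
  thus ?thesis by (auto intro!: continuous_intros)
qed

lemma Fx_cont_line:
  assumes "0 < x0" "x0 < of_nat n + 1"
  shows "continuous_on UNIV (\<lambda>s. Fx a n u (Complex x0 s))"
proof -
  have "Fx a n u holomorphic_on ({t. 0 < Re t \<and> Re t < of_nat n + 1} - of_nat ` {n+1..n})"
    by (rule Fx_holo)
  hence "continuous_on {t. 0 < Re t \<and> Re t < of_nat n + 1} (Fx a n u)"
    by (intro holomorphic_on_imp_continuous_on) simp
  thus ?thesis
    by (rule continuous_on_compose2[OF _ cont_Complex]) (use assms in auto)
qed

lemma Complex_notin_Z1: "s \<noteq> 0 \<Longrightarrow> Complex x0 s \<notin> Z1 n"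
  by (auto simp: Z1_def complex_eq_iff)

lemma gf_bound:
  assumes D: "\<And>t. x0 \<le> Re t \<Longrightarrow> norm (R a n t) \<le> D / norm t ^ 2"
    and K: "norm ((of_real pi / sin (of_real pi * t)) ^ 3 * exp (u * t)) \<le> C"
    and t: "x0 \<le> Re t" and D0: "0 \<le> D"
  shows "norm (gf a n u t) \<le> D / norm t ^ 2 * C"
proof -
  have "norm (gf a n u t) = norm (R a n t) * norm ((of_real pi / sin (of_real pi * t)) ^ 3 * exp (u * t))"
    unfolding gf_def by (simp add: norm_mult mult.assoc)
  also have "\<dots> \<le> D / norm t ^ 2 * C"
    by (intro mult_mono D t K) (use D0 in auto)
  finally show ?thesis .
qed

lemma line_bound:
  assumes x0: "0 < x0" "x0 < of_nat n + 1" and a6: "6 \<le> a"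
    and u: "Re u \<le> 0" "\<bar>Im u\<bar> \<le> 3 * pi"
  shows "\<exists>B. \<forall>s. norm (Fx a n u (Complex x0 s)) \<le> B * inverse (1 + s^2)"
proof -
  note cont = Fx_cont_line[OF x0, of a u]
  have "compact ((\<lambda>s. Fx a n u (Complex x0 s)) ` {-1..1})"
    by (rule compact_continuous_image[OF continuous_on_subset[OF cont]]) auto
  then obtain M where M: "\<And>s. s \<in> {-1..1} \<Longrightarrow> norm (Fx a n u (Complex x0 s)) \<le> M"
    using compact_imp_bounded bounded_iff by (metis image_eqI)
  have M0: "0 \<le> M" using M[of 0] order_trans[OF norm_ge_zero] by auto
  obtain D where D: "D > 0" "\<And>t. x0 \<le> Re t \<Longrightarrow> norm (R a n t) \<le> D / norm t ^ 2"
    using R_bound[OF x0(1) a6, of n] by blast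
  define B where "B = 2 * M + 54 * pi ^ 3 * D"
  have "norm (Fx a n u (Complex x0 s)) \<le> B * inverse (1 + s^2)" for s
  proof (cases "\<bar>s\<bar> \<le> 1")
    case True
    hence "s^2 \<le> 1" using abs_square_le_1 by blast
    hence "1 + s^2 \<le> 2" by simp
    hence "M * (1 + s^2) \<le> M * 2" using M0 by (intro mult_left_mono) auto
    moreover have p: "0 < 1 + s^2" by (simp add: add_pos_nonneg)
    ultimately have "M \<le> (2 * M) / (1 + s^2)" using pos_le_divide_eq[OF p] by (simp add: mult.commute)
    hence "M \<le> 2 * M * inverse (1 + s^2)" by (simp add: divide_inverse)
    moreover have "0 \<le> 54 * pi ^ 3 * D * inverse (1 + s^2)" using D(1) by (simp add: add_pos_nonneg)
    ultimately have "M \<le> B * inverse (1 + s^2)" unfolding B_def by (simp add: algebra_simps)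
    moreover have "s \<in> {-1..1}" using True by auto
    ultimately show ?thesis using M[of s] by linarith
  next
    case False
    define t where "t = Complex x0 s"
    have s0: "s \<noteq> 0" using False by auto
    have Fg: "Fx a n u t = gf a n u t" unfolding t_def Fx_def using Complex_notin_Z1[OF s0] by simp
    have Kb: "norm ((of_real pi / sin (of_real pi * t)) ^ 3 * exp (u * t)) \<le> 27 * pi ^ 3"
      by (rule K_bound) (use x0 u False in \<open>auto simp: t_def\<close>)
    have "norm (gf a n u t) \<le> D / norm t ^ 2 * (27 * pi ^ 3)"
      by (rule gf_bound[OF D(2) Kb]) (use x0 D in \<open>auto simp: t_def\<close>)
    also have "norm t ^ 2 = x0^2 + s^2" by (simp add: t_def cmod_power2)
    also have "D / (x0^2 + s^2) * (27 * pi ^ 3) \<le> D / s^2 * (27 * pi ^ 3)"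
    proof -
      have "0 < s^2" using s0 by simp
      hence "0 < (x0\<^sup>2 + s\<^sup>2) * s\<^sup>2" by (intro mult_pos_pos) (auto intro: add_nonneg_pos)
      thus ?thesis using D(1) by (intro mult_right_mono divide_left_mono) auto
    qed
    also have "D / s^2 * (27 * pi ^ 3) \<le> 54 * pi ^ 3 * D * inverse (1 + s^2)"
    proof -
      have "\<not> s^2 \<le> 1" using False abs_square_le_1 by blast
      hence s1: "1 \<le> s^2" by simp
      have p: "0 < s^2" using s1 by linarith
      have p2: "0 < 1 + s^2" using s1 by linarith
      have "1 * (1 + s^2) \<le> 2 * s^2" using s1 by auto
      hence "(1 + s^2) / s^2 \<le> 2" using pos_divide_le_eq[OF p] by simp
      hence "1 / s^2 * (1 + s^2) \<le> 2" by simp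
      hence "1 / s^2 \<le> 2 / (1 + s^2)" using pos_le_divide_eq[OF p2] by simp
      hence "inverse (s^2) \<le> 2 * inverse (1 + s^2)" by (simp add: divide_inverse)
      hence "27 * pi^3 * D * inverse (s^2) \<le> 27 * pi^3 * D * (2 * inverse (1 + s^2))"
        using D(1) by (intro mult_left_mono) auto
      thus ?thesis by (simp add: divide_inverse algebra_simps)
    qed
    also have "\<dots> \<le> B * inverse (1 + s^2)" unfolding B_def using M0
      by (intro mult_right_mono) auto
    finally show ?thesis using Fg t_def by simp
  qed
  thus ?thesis by blast
qed

lemma neg1_cube: "((-1::complex) ^ n) ^ 3 = (-1) ^ n"
  by (cases "even n") (auto simp: power_mult[symmetric] mult.commute[of n])

lemma gamma_alg0:
  fixes F A Bv C Dv E s X Y \<sigma> :: complex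
  assumes "A \<noteq> 0" "Bv \<noteq> 0" "E \<noteq> 0" "X \<noteq> 0" "Y \<noteq> 0" "\<sigma> ^ 3 = \<sigma>"
  shows "F * s * (\<sigma> * (C / Bv)) ^ 3 * (Dv / E) ^ 3 / (Y / X) * (A * Bv) ^ 3
    = \<sigma> * F * s * (X * A ^ 3) * C ^ 3 * Dv ^ 3 / (Y * E ^ 3)"
proof -
  have "F * s * (\<sigma> * (C / Bv)) ^ 3 * (Dv / E) ^ 3 / (Y / X) * (A * Bv) ^ 3
     = \<sigma>^3 * F * s * (X * A ^ 3) * C ^ 3 * Dv ^ 3 / (Y * E ^ 3)"
    using assms(1-5) by (simp add: field_simps power_mult_distrib)
  thus ?thesis unfolding assms(6) .
qed
lemma gamma_alg:
  fixes F A Bv C Dv E s :: complex and a n :: nat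
  assumes "A \<noteq> 0" "Bv \<noteq> 0" "E \<noteq> 0"
  shows "F * s * ((-1) ^ n * (C / Bv)) ^ 3 * (Dv / E) ^ 3 / (E / A) ^ a * (A * Bv) ^ 3
    = (-1) ^ n * F * s * A ^ (a+3) * C ^ 3 * Dv ^ 3 / E ^ (a+3)"
  using gamma_alg0[OF assms, of "A^a" "E^a" "(-1)^n" F s C Dv] assms
  by (simp add: power_divide power_add neg1_cube)

lemma nonint_not_nonpos: "Im (z::complex) \<noteq> 0 \<Longrightarrow> z \<notin> \<int>\<^sub>\<le>\<^sub>0"
  by (auto elim!: nonpos_Ints_cases)

lemma gamma_id:
  fixes t :: complex
  assumes "Im t \<noteq> 0"
  shows "R a n t * (of_real pi / sin (of_real pi * t)) ^ 3 = (-1) ^ n * fact n ^ (a - 6) * (t + of_nat n / 2)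
    * Gamma t ^ (a + 3) * Gamma (of_nat n - t + 1) ^ 3 * Gamma (t + 2 * of_nat n + 1) ^ 3
    / Gamma (t + of_nat n + 1) ^ (a + 3)"
proof -
  have nt: "t \<notin> \<int>\<^sub>\<le>\<^sub>0" "1 - t \<notin> \<int>\<^sub>\<le>\<^sub>0" "t + of_nat n + 1 \<notin> \<int>\<^sub>\<le>\<^sub>0"
    by (rule nonint_not_nonpos, use assms in simp)+
  have g0: "Gamma t \<noteq> 0" "Gamma (1 - t) \<noteq> 0" "Gamma (t + of_nat n + 1) \<noteq> 0"
    using nt by (simp_all add: Gamma_eq_zero_iff)
  have p1: "pochhammer t (n+1) = Gamma (t + of_nat n + 1) / Gamma t"
    using pochhammer_Gamma[OF nt(1), of "n+1"] by (simp only: of_nat_add of_nat_1 add.assoc)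
  have p2: "pochhammer (t + of_nat n + 1) n = Gamma (t + 2 * of_nat n + 1) / Gamma (t + of_nat n + 1)"
  proof -
    have "t + of_nat n + 1 + of_nat n = t + 2 * of_nat n + 1" by (simp add: algebra_simps)
    thus ?thesis using pochhammer_Gamma[OF nt(3), of n] by (simp only:)
  qed
  have p3: "pochhammer (t - of_nat n) n = (-1) ^ n * (Gamma (of_nat n - t + 1) / Gamma (1 - t))"
  proof -
    have "pochhammer (t - of_nat n) n = pochhammer (- (of_nat n - t)) n" by simp
    also have "\<dots> = (-1) ^ n * pochhammer (1 - t) n" by (subst pochhammer_minus) simp
    also have "pochhammer (1 - t) n = Gamma (of_nat n - t + 1) / Gamma (1 - t)"
    proof -
    have "1 - t + of_nat n = of_nat n - t + 1" by (simp add: algebra_simps)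
    thus ?thesis using pochhammer_Gamma[OF nt(2), of n] by (simp only:)
  qed
    finally show ?thesis .
  qed
  have refl: "of_real pi / sin (of_real pi * t) = Gamma t * Gamma (1 - t)"
    by (rule Gamma_reflection_complex[symmetric])
  show ?thesis
    unfolding R_def p1 p2 p3 refl using gamma_alg[OF g0(1,2,3)] by simp
qed

lemma vline_eq:
  assumes a6: "6 \<le> a" and n1: "1 \<le> n" and u: "Re u \<le> 0" "\<bar>Im u\<bar> \<le> 3 * pi"
    and c: "0 < c" "c < 1"
  shows "(\<lambda>y. J_integrand a n u (Complex c (- y))) integrable_on UNIV"
    "vline_integral c (J_integrand a n u) = - \<i> * integral UNIV (\<lambda>s. Fx a n u (Complex (real n * c) s)) / of_nat n"
proof -
  define x0 where "x0 = real n * c"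
  have x0: "0 < x0" "x0 < of_nat n + 1"
  proof -
    show "0 < x0" using n1 c unfolding x0_def by simp
    have "real n * c \<le> real n * 1" using c by (intro mult_left_mono) auto
    thus "x0 < of_nat n + 1" unfolding x0_def by simp
  qed
  define f where "f s = Fx a n u (Complex x0 s)" for s
  obtain B where B: "\<And>s. norm (f s) \<le> B * inverse (1 + s^2)"
    using line_bound[OF x0 a6 u] unfolding f_def by blast
  have cf: "continuous_on UNIV f" unfolding f_def by (rule Fx_cont_line[OF x0])
  note st = stretch_UNIV[OF cf B n1]
  have eqy: "J_integrand a n u (Complex c (- y)) = f (- real n * y)" if y: "y \<in> UNIV - {0}" for y
  proof -
    have "of_nat n * Complex c (- y) = Complex x0 (- real n * y)"
      by (simp add: complex_eq_iff x0_def)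
    moreover have "- real n * y \<noteq> 0" using y n1 by simp
    ultimately show ?thesis
      unfolding J_integrand_eq f_def Fx_def using Complex_notin_Z1 by simp
  qed
  show "(\<lambda>y. J_integrand a n u (Complex c (- y))) integrable_on UNIV"
    by (rule integrable_spike[OF st(1) negligible_sing[of 0] eqy])
  have "vline_integral c (J_integrand a n u) = integral UNIV (\<lambda>y. f (- real n * y) * (- \<i>))"
    unfolding vline_integral_def by (rule integral_spike[OF negligible_sing[of 0], symmetric]) (simp add: eqy)
  also have "\<dots> = integral UNIV f / of_nat n * (- \<i>)" using st(2) by simp
  finally show "vline_integral c (J_integrand a n u) = - \<i> * integral UNIV (\<lambda>s. Fx a n u (Complex (real n * c) s)) / of_nat n"
    unfolding f_def x0_def by simp
qed

lemma reassoc: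
  fixes s f m w A B C D e :: complex
  shows "(s * f * (m * w) * A * B * C / D) * e = s * m * f * (w * A * B * C / D * e)"
  by (simp add: divide_inverse mult_ac)

lemma J_gamma:
  fixes z u :: complex
  assumes "Im z \<noteq> 0" "1 \<le> n"
  shows "J_integrand a n u z = (-1) ^ n * of_nat n * fact n ^ (a - 6) * ((z + 1/2) * Gamma (of_nat n * z) ^ (a + 3)
             * Gamma (of_nat n - of_nat n * z + 1) ^ 3 * Gamma (of_nat n * z + 2 * of_nat n + 1) ^ 3
             / Gamma (of_nat n * z + of_nat n + 1) ^ (a + 3) * exp (of_nat n * u * z))"
proof -
  define t where "t = of_nat n * z"
  have it: "Im t \<noteq> 0" using assms unfolding t_def by simp
  have "J_integrand a n u z = (R a n t * (of_real pi / sin (of_real pi * t)) ^ 3) * exp (u * t)"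
    unfolding J_integrand_eq gf_def t_def by simp
  also note gamma_id[OF it, of a n]
  also have "t + of_nat n / 2 = of_nat n * (z + 1/2)" unfolding t_def by (simp add: algebra_simps)
  also have "exp (u * t) = exp (of_nat n * u * z)" unfolding t_def by (simp add: ac_simps)
  finally have eq: "J_integrand a n u z = ((-1) ^ n * fact n ^ (a - 6) * (of_nat n * (z + 1/2)) * Gamma t ^ (a + 3)
    * Gamma (of_nat n - t + 1) ^ 3 * Gamma (t + 2 * of_nat n + 1) ^ 3 / Gamma (t + of_nat n + 1) ^ (a + 3))
    * exp (of_nat n * u * z)" .
  show ?thesis unfolding eq t_def by (rule reassoc)
qed

lemma part1:
  assumes n1: "1 \<le> n"
  shows "J a n c u = (-1) ^ n * (of_nat n) ^ 2 / (2 * \<i> * of_real pi) * (fact n) ^ (a - 6)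
        * vline_integral c (\<lambda>z. (z + 1/2) * Gamma (of_nat n * z) ^ (a + 3)
             * Gamma (of_nat n - of_nat n * z + 1) ^ 3 * Gamma (of_nat n * z + 2 * of_nat n + 1) ^ 3
             / Gamma (of_nat n * z + of_nat n + 1) ^ (a + 3) * exp (of_nat n * u * z))"
proof -
  define G where "G = (\<lambda>z. (z + 1/2) * Gamma (of_nat n * z) ^ (a + 3)
             * Gamma (of_nat n - of_nat n * z + 1) ^ 3 * Gamma (of_nat n * z + 2 * of_nat n + 1) ^ 3
             / Gamma (of_nat n * z + of_nat n + 1) ^ (a + 3) * exp (of_nat n * u * z))"
  define \<kappa> :: complex where "\<kappa> = (-1) ^ n * of_nat n * fact n ^ (a - 6)"
  have "vline_integral c (J_integrand a n u) = integral UNIV (\<lambda>y. \<kappa> * (G (Complex c (- y)) * (- \<i>)))"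
    unfolding vline_integral_def
  proof (rule integral_spike[OF negligible_sing[of 0]])
    fix y :: real assume "y \<in> UNIV - {0}"
    hence "Im (Complex c (- y)) \<noteq> 0" by simp
    from J_gamma[OF this n1, of a u] show "\<kappa> * (G (Complex c (- y)) * - \<i>) = J_integrand a n u (Complex c (- y)) * - \<i>"
      unfolding \<kappa>_def G_def by (simp only: mult.assoc)
  qed
  also have "\<dots> = \<kappa> * vline_integral c G" unfolding vline_integral_def by simp
  finally have "J a n c u = of_nat n / (2 * \<i> * of_real pi) * (\<kappa> * vline_integral c G)"
    unfolding J_def by simp
  thus ?thesis unfolding G_def[symmetric] \<kappa>_def by (simp add: power2_eq_square)
qed

definition cc :: "complex \<Rightarrow> complex" where
  "cc t = of_real pi * cos (of_real pi * t) / sin (of_real pi * t)"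
definition cd1 :: "complex \<Rightarrow> complex" where
  "cd1 t = - (of_real pi ^ 2) / sin (of_real pi * t) ^ 2"
definition cd2 :: "complex \<Rightarrow> complex" where
  "cd2 t = 2 * of_real pi ^ 3 * cos (of_real pi * t) / sin (of_real pi * t) ^ 3"

lemma aux_sc:
  fixes S C p :: complex
  assumes "S \<noteq> 0" "S^2 + C^2 = 1"
  shows "(p * (- S * p) * S - p * C * (C * p)) / (S * S) = - (p ^ 2) / S ^ 2"
proof -
  have "p * (- S * p) * S - p * C * (C * p) = - (p^2) * (S^2 + C^2)" by (simp add: algebra_simps power2_eq_square)
  also have "\<dots> = - (p^2)" using assms(2) by simp
  finally show ?thesis by (simp add: power2_eq_square)
qed

lemma cc_deriv:
  assumes s: "sin (of_real pi * t) \<noteq> 0"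
  shows "(cc has_field_derivative cd1 t) (at t)"
proof -
  have "(cc has_field_derivative
     (of_real pi * (- sin (of_real pi * t) * of_real pi) * sin (of_real pi * t)
      - of_real pi * cos (of_real pi * t) * (cos (of_real pi * t) * of_real pi)) / (sin (of_real pi * t) * sin (of_real pi * t))) (at t)"
    unfolding cc_def[abs_def]
    by (rule derivative_eq_intros refl | use s in simp)+
  moreover have "(of_real pi * (- sin (of_real pi * t) * of_real pi) * sin (of_real pi * t)
      - of_real pi * cos (of_real pi * t) * (cos (of_real pi * t) * of_real pi)) / (sin (of_real pi * t) * sin (of_real pi * t))
      = cd1 t"
    unfolding cd1_def by (rule aux_sc[OF s sin_cos_squared_add])
  ultimately show ?thesis by simp
qed

lemma cd1_deriv:
  assumes s: "sin (of_real pi * t) \<noteq> 0"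
  shows "(cd1 has_field_derivative cd2 t) (at t)"
proof -
  have "(cd1 has_field_derivative
     - (- (of_real pi ^ 2) * (of_nat 2 * sin (of_real pi * t) ^ (2 - 1) * (cos (of_real pi * t) * of_real pi))
        / (sin (of_real pi * t) ^ 2 * sin (of_real pi * t) ^ 2))) (at t)"
    unfolding cd1_def[abs_def]
    by (rule derivative_eq_intros refl | use s in simp)+
  moreover have "- (- (of_real pi ^ 2) * (of_nat 2 * sin (of_real pi * t) ^ (2 - 1) * (cos (of_real pi * t) * of_real pi))
        / (sin (of_real pi * t) ^ 2 * sin (of_real pi * t) ^ 2)) = cd2 t"
    unfolding cd2_def using s by (simp add: field_simps power2_eq_square power3_eq_cube)
  ultimately show ?thesis by simp
qed

definition Qf :: "nat \<Rightarrow> nat \<Rightarrow> complex \<Rightarrow> complex" where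
  "Qf a n t = deriv (deriv (R a n)) t / 2 + \<i> * of_real pi * deriv (R a n) t"

lemma aux_K:
  fixes S C p :: complex
  assumes "S \<noteq> 0"
  shows "(p / S) ^ 3 * (C + \<i> * S) = (2 * p ^ 3 * C / S ^ 3) / 2 - \<i> * p * (- (p ^ 2) / S ^ 2)"
  using assms by (simp add: field_simps power3_eq_cube power2_eq_square)

lemma gf_decomp:
  assumes s: "sin (of_real pi * t) \<noteq> 0"
  shows "gf a n (\<i> * of_real pi) t = R a n t * (cd2 t / 2 - \<i> * of_real pi * cd1 t)"
proof -
  have e: "exp (\<i> * of_real pi * t) = cos (of_real pi * t) + \<i> * sin (of_real pi * t)"
    using exp_Euler[of "of_real pi * t"] by (simp add: mult.assoc)
  show ?thesis unfolding gf_def e cd1_def cd2_def using aux_K[OF s, of "of_real pi" "cos (of_real pi * t)"]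
    by (simp add: mult.assoc)
qed

lemma R_derivs:
  assumes "0 < Re t"
  shows "(R a n has_field_derivative deriv (R a n) t) (at t)"
    "(deriv (R a n) has_field_derivative deriv (deriv (R a n)) t) (at t)"
proof -
  have o: "open {t::complex. 0 < Re t}" by (simp add: open_halfspace_Re_gt)
  show "(R a n has_field_derivative deriv (R a n) t) (at t)"
    using holomorphic_derivI[OF R_holo o] assms by simp
  have "deriv (R a n) holomorphic_on {t. 0 < Re t}" by (intro holomorphic_deriv R_holo o)
  thus "(deriv (R a n) has_field_derivative deriv (deriv (R a n)) t) (at t)"
    using holomorphic_derivI[OF _ o] assms by simp
qed

lemma Qf_holo: "Qf a n holomorphic_on {t. 0 < Re t}"
proof -
  have o: "open {t::complex. 0 < Re t}" by (simp add: open_halfspace_Re_gt)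
  show ?thesis unfolding Qf_def[abs_def] using o
    by (intro holomorphic_intros holomorphic_deriv R_holo) auto
qed

lemma residue_Fx:
  assumes nk: "n < k"
  shows "residue (Fx a n (\<i> * of_real pi)) (of_nat k) = Qf a n (of_nat k)"
proof -
  define z :: complex where "z = of_nat k"
  define U where "U = ball z (1/2)"
  define \<gamma> where "\<gamma> = circlepath z (1/4)"
  define u0 :: complex where "u0 = \<i> * of_real pi"
  have k1: "1 \<le> k" using nk by simp
  have oU: "open U" unfolding U_def by simp
  have U0: "0 < Re t" if "t \<in> U" for t
  proof -
    have "\<bar>Re t - Re z\<bar> \<le> norm (t - z)" using abs_Re_le_cmod[of "t - z"] by simp
    also have "\<dots> < 1/2" using that by (simp add: U_def dist_norm norm_minus_commute)
    finally have "\<bar>Re t - Re z\<bar> < 1/2" .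
    moreover have "1 \<le> Re z" using k1 unfolding z_def by simp
    ultimately show ?thesis by linarith
  qed
  have Uint: "t \<notin> \<int>" if "t \<in> U - {z}" for t
  proof
    assume "t \<in> \<int>"
    then obtain m where m: "t = of_int m" by (auto elim: Ints_cases)
    have "norm (of_int (m - int k) :: complex) = norm (t - z)" by (simp add: m z_def)
    also have "\<dots> < 1/2" using that by (simp add: U_def dist_norm norm_minus_commute)
    finally have "\<bar>m - int k\<bar> < 1/2" by (simp only: norm_of_int)
    hence "m = int k" by linarith
    thus False using that m by (simp add: z_def)
  qed
  have UZ: "t \<notin> Z1 n" if "t \<in> U" for t
  proof
    assume "t \<in> Z1 n"
    then obtain j where j: "j \<le> n" "t = of_nat j" by (auto simp: Z1_def)
    have "1 \<le> norm (of_nat j - of_nat k :: complex)" using j nk by (intro nat_dist_ge1) simp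
    also have "\<dots> < 1/2" using that j by (simp add: U_def z_def dist_norm norm_minus_commute)
    finally show False by simp
  qed
  have sub: "U - {z} \<subseteq> {t. 0 < Re t} - \<int>" using U0 Uint by auto
  have gh: "gf a n u0 holomorphic_on U - {z}" by (rule holomorphic_on_subset[OF gf_holo sub])
  have Fh: "Fx a n u0 holomorphic_on U - {z}"
    using gh by (rule holomorphic_cong[THEN iffD1, rotated 2]) (use UZ in \<open>auto simp: Fx_def\<close>)
  have sinnz: "sin (of_real pi * t) \<noteq> 0" if "t \<in> U - {z}" for t
    using sin_pi_nz Uint[OF that] by blast
  define R1 where "R1 = deriv (R a n)"
  define R2 where "R2 = deriv (deriv (R a n))"
  have R1R2: "deriv R1 = R2" unfolding R1_def R2_def ..
  define \<Phi> where "\<Phi> t = (R a n t * cd1 t - R1 t * cc t) / 2 - \<i> * of_real pi * (R a n t * cc t)" for t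
  have dPhi: "(\<Phi> has_field_derivative (gf a n u0 t - Qf a n t * cc t)) (at t)" if t: "t \<in> U - {z}" for t
  proof -
    have re: "0 < Re t" using t U0 by auto
    note hR = R_derivs(1)[OF re, of a n, folded R1_def]
    note hR1 = R_derivs(2)[OF re, of a n, folded R1_def R2_def]
    note hc = cc_deriv[OF sinnz[OF t]]
    note hc1 = cd1_deriv[OF sinnz[OF t]]
    have "(\<Phi> has_field_derivative
        ((R1 t * cd1 t + cd2 t * R a n t) - (R2 t * cc t + cd1 t * R1 t)) / 2
        - \<i> * of_real pi * (R1 t * cc t + cd1 t * R a n t)) (at t)"
      unfolding \<Phi>_def[abs_def]
      by (intro DERIV_diff DERIV_cdivide DERIV_cmult DERIV_mult hR hR1 hc hc1)
    moreover have "((R1 t * cd1 t + cd2 t * R a n t) - (R2 t * cc t + cd1 t * R1 t)) / 2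
        - \<i> * of_real pi * (R1 t * cc t + cd1 t * R a n t) = gf a n u0 t - Qf a n t * cc t"
      unfolding u0_def gf_decomp[OF sinnz[OF t]] Qf_def R2_def[symmetric] R1_def[symmetric]
      by (simp add: R1R2 field_simps)
    ultimately show ?thesis by simp
  qed
  have vg: "valid_path \<gamma>" "pathfinish \<gamma> = pathstart \<gamma>" unfolding \<gamma>_def by auto
  have pig: "path_image \<gamma> \<subseteq> U - {z}" unfolding \<gamma>_def U_def by (auto simp: path_image_circlepath)
  have int0: "((\<lambda>t. gf a n u0 t - Qf a n t * cc t) has_contour_integral 0) \<gamma>"
    by (rule Cauchy_theorem_primitive[of "U - {z}" \<Phi>])
       (use dPhi vg pig in \<open>auto intro: has_field_derivative_at_within\<close>)
  have oUz: "open (U - {z})" using oU by auto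
  have Qch: "(\<lambda>t. Qf a n t * cc t) holomorphic_on U - {z}"
  proof -
    have "Qf a n holomorphic_on U - {z}" by (rule holomorphic_on_subset[OF Qf_holo]) (use U0 in auto)
    thus ?thesis unfolding cc_def[abs_def] using sinnz by (intro holomorphic_intros) auto
  qed
  have ig: "gf a n u0 contour_integrable_on \<gamma>"
    by (rule contour_integrable_holomorphic_simple[OF gh oUz vg(1) pig])
  have iq: "(\<lambda>t. Qf a n t * cc t) contour_integrable_on \<gamma>"
    by (rule contour_integrable_holomorphic_simple[OF Qch oUz vg(1) pig])
  have "contour_integral \<gamma> (gf a n u0) - contour_integral \<gamma> (\<lambda>t. Qf a n t * cc t) = 0"
    using contour_integral_diff[OF ig iq] contour_integral_unique[OF int0] by simp
  hence e1: "contour_integral \<gamma> (gf a n u0) = contour_integral \<gamma> (\<lambda>t. Qf a n t * cc t)" by simp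
  have e2: "contour_integral \<gamma> (Fx a n u0) = contour_integral \<gamma> (gf a n u0)"
    by (rule contour_integral_eq) (use pig UZ in \<open>auto simp: Fx_def\<close>)
  have cb: "cball z (1/4) \<subseteq> U" unfolding U_def by auto
  have zU: "z \<in> U" unfolding U_def by simp
  have r1: "(Fx a n u0 has_contour_integral 2 * pi * \<i> * residue (Fx a n u0) z) \<gamma>"
    unfolding \<gamma>_def by (rule base_residue[OF oU zU _ Fh cb]) simp
  have r2: "((\<lambda>t. Qf a n t * cc t) has_contour_integral 2 * pi * \<i> * residue (\<lambda>t. Qf a n t * cc t) z) \<gamma>"
    unfolding \<gamma>_def by (rule base_residue[OF oU zU _ Qch cb]) simp
  have lim: "((\<lambda>w. Qf a n w * cc w * (w - z)) \<longlongrightarrow> Qf a n z) (at z)"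
  proof -
    have eqf: "Qf a n w * cc w * (w - z) = Qf a n w * (of_real pi * cos (of_real pi * w)) * ((w - z) / sin (of_real pi * w))" for w
      unfolding cc_def by (simp add: divide_inverse mult_ac)
    have o: "open {t::complex. 0 < Re t}" by (simp add: open_halfspace_Re_gt)
    have zr: "0 < Re z" using k1 by (simp add: z_def)
    have cQ: "isCont (Qf a n) z"
      using holomorphic_on_imp_continuous_on[OF Qf_holo] o zr
      by (simp add: continuous_on_eq_continuous_at)
    have L: "((\<lambda>w. Qf a n w * (of_real pi * cos (of_real pi * w)) * ((w - z) / sin (of_real pi * w)))
        \<longlongrightarrow> Qf a n z * (of_real pi * cos (of_real pi * z)) * ((-1) ^ k / of_real pi)) (at z)"
      unfolding z_def by (intro tendsto_intros sin_quot_lim) (use cQ in \<open>auto simp: isCont_def z_def\<close>)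
    have V: "Qf a n z * (of_real pi * cos (of_real pi * z)) * ((-1) ^ k / of_real pi) = Qf a n z"
    proof -
      have "cos (of_real pi * z) = (-1) ^ k" unfolding z_def using cos_npi_complex'[of k] by (simp add: mult.commute)
      moreover have "((-1::complex) ^ k) * (-1) ^ k = 1" by (simp add: power_add[symmetric] mult_2[symmetric])
      ultimately show ?thesis by (simp add: field_simps)
    qed
    show ?thesis unfolding eqf using L unfolding V .
  qed
  have r3: "residue (\<lambda>t. Qf a n t * cc t) z = Qf a n z"
    by (rule residue_simple'[OF oU zU Qch lim])
  have "2 * pi * \<i> * residue (Fx a n u0) z = 2 * pi * \<i> * Qf a n z"
    using has_contour_integral_unique[OF r1 has_contour_integral_integral[OF contour_integrable_holomorphic_simple[OF Fh oUz vg(1) pig]]]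
      has_contour_integral_unique[OF r2 has_contour_integral_integral[OF iq]] e1 e2 r3 by simp
  thus ?thesis unfolding z_def u0_def by simp
qed

lemma rect_pig:
  assumes x0: "0 < x0" "x0 < real n" and nN: "n \<le> N" "1 \<le> n"
  shows "path_image (rectpath (Complex x0 (- real N)) (Complex (real N + 1/2) (real N)))
    \<subseteq> {t. 0 < Re t \<and> Re t < of_nat N + 1} - of_nat ` {n+1..N}"
proof -
  define a1 where "a1 = Complex x0 (- real N)"
  define a3 where "a3 = Complex (real N + 1/2) (real N)"
  define S where "S = {t. 0 < Re t \<and> Re t < of_nat N + 1}"
  define pts :: "complex set" where "pts = of_nat ` {n+1..N}"
  define \<gamma> where "\<gamma> = rectpath a1 a3"
  have N1: "1 \<le> N" using nN by simp
  have le: "Re a1 \<le> Re a3" "Im a1 \<le> Im a3" using x0 nN by (auto simp: a1_def a3_def)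
  have cbS: "cbox a1 a3 \<subseteq> S" using x0 unfolding S_def by (auto simp: in_cbox_complex_iff a1_def a3_def)
  have pig: "path_image \<gamma> \<subseteq> S - pts"
  proof
    fix z assume z: "z \<in> path_image \<gamma>"
    hence zc: "z \<in> cbox a1 a3" using path_image_rectpath_subset_cbox[OF le] unfolding \<gamma>_def by auto
    have "z \<notin> pts"
    proof
      assume "z \<in> pts"
      then obtain k where k: "k \<in> {n+1..N}" "z = of_nat k" unfolding pts_def by auto
      from z have "(Re z \<in> {Re a1, Re a3} \<and> Im z \<in> {Im a1..Im a3}) \<or> (Im z \<in> {Im a1, Im a3} \<and> Re z \<in> {Re a1..Re a3})"
        unfolding \<gamma>_def path_image_rectpath[OF le] by auto
      moreover have "Re z = real k" "Im z = 0" using k by auto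
      moreover have "real k \<noteq> real N + 1/2"
      proof
        assume "real k = real N + 1/2"
        hence "2 * real k = 2 * real N + 1" by simp
        hence "2 * k = 2 * N + 1" by linarith
        thus False by presburger
      qed
      moreover have "x0 < real k" using k x0 by auto
      ultimately show False using N1 by (auto simp: a1_def a3_def)
    qed
    thus "z \<in> S - pts" using zc cbS by auto
  qed
  thus ?thesis unfolding \<gamma>_def a1_def a3_def S_def pts_def .
qed

lemma rect_res:
  assumes x0: "0 < x0" "x0 < real n" and nN: "n \<le> N" "1 \<le> n"
  shows "contour_integral (rectpath (Complex x0 (- real N)) (Complex (real N + 1/2) (real N))) (Fx a n (\<i> * of_real pi))
     = 2 * pi * \<i> * (\<Sum>k\<in>{n+1..N}. Qf a n (of_nat k))"
proof -
  define a1 where "a1 = Complex x0 (- real N)"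
  define a3 where "a3 = Complex (real N + 1/2) (real N)"
  define S where "S = {t. 0 < Re t \<and> Re t < of_nat N + 1}"
  define pts :: "complex set" where "pts = of_nat ` {n+1..N}"
  define \<gamma> where "\<gamma> = rectpath a1 a3"
  have N1: "1 \<le> N" using nN by simp
  have le: "Re a1 \<le> Re a3" "Im a1 \<le> Im a3" using x0 nN by (auto simp: a1_def a3_def)
  have oS: "open S" unfolding S_def
    by (auto simp: Collect_conj_eq intro!: open_Int open_halfspace_Re_gt open_halfspace_Re_lt)
  have cS: "connected S" unfolding S_def
    by (rule convex_connected) (auto simp: Collect_conj_eq intro!: convex_Int convex_halfspace_Re_gt convex_halfspace_Re_lt)
  have fin: "finite pts" unfolding pts_def by simp
  have holo: "Fx a n (\<i> * of_real pi) holomorphic_on S - pts" unfolding S_def pts_def by (rule Fx_holo)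
  have cbS: "cbox a1 a3 \<subseteq> S" using x0 unfolding S_def by (auto simp: in_cbox_complex_iff a1_def a3_def)
  have pig: "path_image \<gamma> \<subseteq> S - pts" unfolding \<gamma>_def a1_def a3_def S_def pts_def
    by (rule rect_pig[OF x0 nN])
  have homo: "\<forall>z. z \<notin> S \<longrightarrow> winding_number \<gamma> z = 0"
    unfolding \<gamma>_def using winding_number_rectpath_outside[OF le] cbS by blast
  have "contour_integral \<gamma> (Fx a n (\<i> * of_real pi)) = 2 * pi * \<i> * (\<Sum>p\<in>pts. winding_number \<gamma> p * residue (Fx a n (\<i> * of_real pi)) p)"
    by (rule Residue_theorem[OF oS cS fin holo _ _ pig homo]) (auto simp: \<gamma>_def)
  also have "(\<Sum>p\<in>pts. winding_number \<gamma> p * residue (Fx a n (\<i> * of_real pi)) p) = (\<Sum>p\<in>pts. Qf a n p)"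
  proof (rule sum.cong[OF refl])
    fix p assume "p \<in> pts"
    then obtain k where k: "k \<in> {n+1..N}" "p = of_nat k" unfolding pts_def by auto
    have "p \<in> box a1 a3" using k x0 N1 by (auto simp: in_box_complex_iff a1_def a3_def)
    hence "winding_number \<gamma> p = 1" unfolding \<gamma>_def by (rule winding_number_rectpath)
    moreover have "residue (Fx a n (\<i> * of_real pi)) p = Qf a n p" using k residue_Fx[of n k a] by auto
    ultimately show "winding_number \<gamma> p * residue (Fx a n (\<i> * of_real pi)) p = Qf a n p" by simp
  qed
  also have "(\<Sum>p\<in>pts. Qf a n p) = (\<Sum>k\<in>{n+1..N}. Qf a n (of_nat k))"
    unfolding pts_def by (rule sum.reindex_cong[of of_nat]) (auto simp: inj_on_def)
  finally show ?thesis unfolding \<gamma>_def a1_def a3_def .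
qed

lemma edge_bound:
  assumes D: "\<And>t. x0 \<le> Re t \<Longrightarrow> norm (R a n t) \<le> D / norm t ^ 2" and D0: "0 < D"
    and x0: "0 < x0" and N1: "1 \<le> N"
    and t: "x0 \<le> Re t" "\<bar>Im t\<bar> = real N \<or> Re t = real N + 1/2"
  shows "norm (Fx a n (\<i> * of_real pi) t) \<le> 27 * pi ^ 3 * D / (real N) ^ 2"
proof -
  have nZ: "t \<notin> Z1 n"
  proof
    assume "t \<in> Z1 n"
    then obtain j where j: "t = of_nat j" by (auto simp: Z1_def)
    show False
    proof (cases "\<bar>Im t\<bar> = real N")
      case True thus False using j N1 by simp
    next
      case False
      hence "real j = real N + 1/2" using t j by simp
      hence "2 * real j = 2 * real N + 1" by simp
      hence "2 * j = 2 * N + 1" by linarith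
      thus False by presburger
    qed
  qed
  have K: "norm ((of_real pi / sin (of_real pi * t)) ^ 3 * exp (\<i> * of_real pi * t)) \<le> 27 * pi ^ 3"
  proof (cases "\<bar>Im t\<bar> = real N")
    case True
    show ?thesis by (rule K_bound) (use True N1 t x0 in auto)
  next
    case False
    hence "Re t = real N + 1/2" using t by auto
    moreover have "2 * pi ^ 3 \<le> 27 * pi ^ 3" by simp
    ultimately show ?thesis using K_bound_right[of t N] by linarith
  qed
  have nt: "real N \<le> norm t"
  proof (cases "\<bar>Im t\<bar> = real N")
    case True thus ?thesis using abs_Im_le_cmod[of t] by simp
  next
    case False
    hence "Re t = real N + 1/2" using t by auto
    thus ?thesis using complex_Re_le_cmod[of t] by simp
  qed
  have "norm (gf a n (\<i> * of_real pi) t) \<le> D / norm t ^ 2 * (27 * pi ^ 3)"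
    by (rule gf_bound[OF D K t(1) less_imp_le[OF D0]])
  also have "\<dots> \<le> D / (real N) ^ 2 * (27 * pi ^ 3)"
  proof -
    have "0 < real N" using N1 by simp
    hence "0 < (norm t)^2 * (real N)^2" using nt by (intro mult_pos_pos) auto
    thus ?thesis using D0 N1 nt by (intro mult_right_mono divide_left_mono power_mono) auto
  qed
  finally show ?thesis using nZ by (simp add: Fx_def mult.commute)
qed

lemma seg_bound:
  assumes "f contour_integrable_on linepath p q" "0 \<le> B" "\<And>x. x \<in> closed_segment p q \<Longrightarrow> norm (f x) \<le> B"
    "norm (q - p) \<le> L"
  shows "norm (contour_integral (linepath p q) f) \<le> B * L"
proof -
  have "norm (contour_integral (linepath p q) f) \<le> B * norm (q - p)"
    by (rule contour_integral_bound_linepath[OF assms(1-3)])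
  also have "\<dots> \<le> B * L" using assms(2,4) by (rule mult_left_mono[rotated])
  finally show ?thesis .
qed

lemma rect_est:
  assumes x0: "0 < x0" "x0 < real n" and nN: "n \<le> N" "1 \<le> n"
    and D: "\<And>t. x0 \<le> Re t \<Longrightarrow> norm (R a n t) \<le> D / norm t ^ 2" and D0: "0 < D"
  shows "norm (2 * pi * \<i> * (\<Sum>k\<in>{n+1..N}. Qf a n (of_nat k))
      + \<i> * integral {-real N..real N} (\<lambda>x. Fx a n (\<i> * of_real pi) (Complex x0 x)))
      \<le> 27 * pi ^ 3 * D / (real N) ^ 2 * (4 * real N + 2)"
proof -
  define F where "F = Fx a n (\<i> * of_real pi)"
  define a1 where "a1 = Complex x0 (- real N)"
  define a2 where "a2 = Complex (real N + 1/2) (- real N)"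
  define a3 where "a3 = Complex (real N + 1/2) (real N)"
  define a4 where "a4 = Complex x0 (real N)"
  define W where "W = {t. 0 < Re t \<and> Re t < of_nat N + 1} - of_nat ` {n+1..N}"
  define B where "B = 27 * pi ^ 3 * D / (real N) ^ 2"
  have N1: "1 \<le> N" using nN by simp
  have B0: "0 \<le> B" unfolding B_def using D0 by simp
  have xN: "x0 \<le> real N + 1/2" using x0 nN by linarith
  have oW: "open W" unfolding W_def
    by (intro open_Diff finite_imp_closed)
       (auto simp: Collect_conj_eq intro!: open_Int open_halfspace_Re_gt open_halfspace_Re_lt)
  have holo: "F holomorphic_on W" unfolding F_def W_def by (rule Fx_holo)
  have rp: "rectpath a1 a3 = linepath a1 a2 +++ linepath a2 a3 +++ linepath a3 a4 +++ linepath a4 a1"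
    by (simp add: rectpath_def Let_def a1_def a2_def a3_def a4_def)
  have P: "path_image (rectpath a1 a3) \<subseteq> W"
    unfolding W_def a1_def a3_def by (rule rect_pig[OF x0 nN])
  have segs: "closed_segment a1 a2 \<subseteq> W" "closed_segment a2 a3 \<subseteq> W" "closed_segment a3 a4 \<subseteq> W" "closed_segment a4 a1 \<subseteq> W"
    using P unfolding rp by (auto simp: path_image_join)
  have ci: "F contour_integrable_on linepath p q" if "closed_segment p q \<subseteq> W" for p q
    by (rule contour_integrable_holomorphic_simple[OF holo oW]) (use that in auto)
  note i1 = ci[OF segs(1)] and i2 = ci[OF segs(2)] and i3 = ci[OF segs(3)] and i4 = ci[OF segs(4)]
  have "contour_integral (rectpath a1 a3) F = contour_integral (linepath a1 a2) F + (contour_integral (linepath a2 a3) F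
      + (contour_integral (linepath a3 a4) F + contour_integral (linepath a4 a1) F))"
    unfolding rp using i1 i2 i3 i4 by (simp add: contour_integrable_joinI valid_path_join)
  moreover have I4: "contour_integral (linepath a4 a1) F = - \<i> * integral {-real N..real N} (\<lambda>x. F (Complex x0 x))"
  proof -
    define I where "I = contour_integral (linepath a1 a4) F"
    have i14: "F contour_integrable_on linepath a1 a4"
      using segs(4) by (intro ci) (simp add: closed_segment_commute)
    have "(F has_contour_integral I) (linepath a1 a4)" unfolding I_def by (rule has_contour_integral_integral[OF i14])
    hence "((\<lambda>x. F (Complex x0 x)) has_integral (- \<i> * I)) {- real N..real N}"
      by (subst (asm) has_contour_integral_linepath_same_Re_iff[of a1 x0 a4 "- real N" "real N"])
         (use N1 in \<open>auto simp: a1_def a4_def\<close>)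
    hence "integral {-real N..real N} (\<lambda>x. F (Complex x0 x)) = - \<i> * I" by (rule integral_unique)
    hence "I = \<i> * integral {-real N..real N} (\<lambda>x. F (Complex x0 x))" by simp
    moreover have "contour_integral (linepath a4 a1) F = - I"
      unfolding I_def using contour_integral_reversepath[of "linepath a1 a4" F] by simp
    ultimately show ?thesis by simp
  qed
  moreover have "contour_integral (rectpath a1 a3) F = 2 * pi * \<i> * (\<Sum>k\<in>{n+1..N}. Qf a n (of_nat k))"
    unfolding F_def a1_def a3_def by (rule rect_res[OF x0 nN])
  ultimately have eq: "2 * pi * \<i> * (\<Sum>k\<in>{n+1..N}. Qf a n (of_nat k)) + \<i> * integral {-real N..real N} (\<lambda>x. F (Complex x0 x))
      = contour_integral (linepath a1 a2) F + contour_integral (linepath a2 a3) F + contour_integral (linepath a3 a4) F"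
    by (simp add: algebra_simps)
  have eb: "norm (F t) \<le> B" if "x0 \<le> Re t" "\<bar>Im t\<bar> = real N \<or> Re t = real N + 1/2" for t
    unfolding F_def B_def by (rule edge_bound[OF D D0 x0(1) N1 that])
  have b1: "norm (contour_integral (linepath a1 a2) F) \<le> B * (real N + 1/2)"
  proof (rule seg_bound[OF i1 B0])
    fix x assume "x \<in> closed_segment a1 a2"
    hence "Im x = - real N" "x0 \<le> Re x" using x0 xN
      by (auto simp: closed_segment_same_Im a1_def a2_def closed_segment_eq_real_ivl split: if_splits)
    thus "norm (F x) \<le> B" by (intro eb) auto
  next
    have "a2 - a1 = of_real (real N + 1/2 - x0)" by (simp add: complex_eq_iff a1_def a2_def)
    hence "norm (a2 - a1) = \<bar>real N + 1/2 - x0\<bar>" by (simp only: norm_of_real real_norm_def)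
    thus "norm (a2 - a1) \<le> real N + 1/2" using x0 xN by linarith
  qed
  have b2: "norm (contour_integral (linepath a2 a3) F) \<le> B * (2 * real N)"
  proof (rule seg_bound[OF i2 B0])
    fix x assume "x \<in> closed_segment a2 a3"
    hence "Re x = real N + 1/2" by (auto simp: closed_segment_same_Re a2_def a3_def)
    thus "norm (F x) \<le> B" using x0 nN by (intro eb) auto
  next
    have "a3 - a2 = \<i> * of_real (2 * real N)" by (simp add: complex_eq_iff a2_def a3_def)
    thus "norm (a3 - a2) \<le> 2 * real N" by (simp add: norm_mult)
  qed
  have b3: "norm (contour_integral (linepath a3 a4) F) \<le> B * (real N + 1/2)"
  proof (rule seg_bound[OF i3 B0])
    fix x assume "x \<in> closed_segment a3 a4"
    hence "Im x = real N" "x0 \<le> Re x" using x0 xN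
      by (auto simp: closed_segment_same_Im a3_def a4_def closed_segment_eq_real_ivl split: if_splits)
    thus "norm (F x) \<le> B" by (intro eb) auto
  next
    have "a4 - a3 = - of_real (real N + 1/2 - x0)" by (simp add: complex_eq_iff a3_def a4_def)
    hence "norm (a4 - a3) = \<bar>real N + 1/2 - x0\<bar>" by (simp only: norm_minus_cancel norm_of_real real_norm_def)
    thus "norm (a4 - a3) \<le> real N + 1/2" using x0 xN by linarith
  qed
  have "norm (2 * pi * \<i> * (\<Sum>k\<in>{n+1..N}. Qf a n (of_nat k)) + \<i> * integral {-real N..real N} (\<lambda>x. F (Complex x0 x)))
      \<le> norm (contour_integral (linepath a1 a2) F) + norm (contour_integral (linepath a2 a3) F) + norm (contour_integral (linepath a3 a4) F)"
    unfolding eq by (meson norm_triangle_ineq order_trans add_mono order_refl)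
  also have "\<dots> \<le> B * (real N + 1/2) + B * (2 * real N) + B * (real N + 1/2)" using b1 b2 b3 by linarith
  also have "\<dots> \<le> B * (4 * real N + 2)" using B0 by (simp add: algebra_simps)
  finally show ?thesis unfolding F_def B_def .
qed

lemma filterlim_of_real_at: "filterlim (\<lambda>y::real. complex_of_real y) (at (of_real x)) (at x)"
  unfolding filterlim_at
  by (auto simp: eventually_at_filter intro!: tendsto_eq_intros)

lemma deriv_transfer:
  fixes g :: "complex \<Rightarrow> complex" and h :: "real \<Rightarrow> real"
  assumes d: "(g has_field_derivative D) (at (of_real x))"
    and ev: "eventually (\<lambda>y. g (of_real y) = of_real (h y)) (nhds x)"
  shows "(h has_real_derivative Re D) (at x)" "Im D = 0"
proof -
  have lim1: "((\<lambda>w. (g w - g (of_real x)) / (w - of_real x)) \<longlongrightarrow> D) (at (of_real x))"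
    using d unfolding has_field_derivative_iff .
  have lim2: "((\<lambda>y. (g (of_real y) - g (of_real x)) / (of_real y - of_real x)) \<longlongrightarrow> D) (at x)"
    by (rule filterlim_compose[OF lim1 filterlim_of_real_at])
  have Px: "g (of_real x) = of_real (h x)" using eventually_nhds_x_imp_x[OF ev] .
  have eva: "eventually (\<lambda>y. g (of_real y) = of_real (h y)) (at x)"
    using ev unfolding eventually_at_filter by (auto elim: eventually_mono)
  have "eventually (\<lambda>y. (g (of_real y) - g (of_real x)) / (of_real y - of_real x) = of_real ((h y - h x) / (y - x))) (at x)"
    using eva by eventually_elim (simp add: Px)
  hence lim3: "((\<lambda>y. complex_of_real ((h y - h x) / (y - x))) \<longlongrightarrow> D) (at x)"
    by (rule Lim_transform_eventually[OF lim2])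
  have "((\<lambda>y. Re (complex_of_real ((h y - h x) / (y - x)))) \<longlongrightarrow> Re D) (at x)"
    by (rule tendsto_Re[OF lim3])
  thus "(h has_real_derivative Re D) (at x)" unfolding has_field_derivative_iff by simp
  have "((\<lambda>y. Im (complex_of_real ((h y - h x) / (y - x)))) \<longlongrightarrow> Im D) (at x)"
    by (rule tendsto_Im[OF lim3])
  hence "((\<lambda>y. 0) \<longlongrightarrow> Im D) (at x)" by simp
  thus "Im D = 0" using tendsto_unique[OF _ _ tendsto_const] by (metis at_neq_bot)
qed

lemma R_of_real: "R a n (of_real y) = of_real (Rr a n y)"
  unfolding R_def Rr_def by (simp add: pochhammer_of_real[symmetric])

lemma R_derivs_real:
  assumes x: "0 < x"
  shows "deriv (Rr a n) x = Re (deriv (R a n) (of_real x))" "deriv (R a n) (of_real x) = of_real (deriv (Rr a n) x)"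
    "deriv (deriv (Rr a n)) x = Re (deriv (deriv (R a n)) (of_real x))"
proof -
  have d1: "(Rr a n has_real_derivative Re (deriv (R a n) (of_real y))) (at y)"
    and i1: "Im (deriv (R a n) (of_real y)) = 0" if "0 < y" for y
  proof -
    have "(R a n has_field_derivative deriv (R a n) (of_real y)) (at (of_real y))"
      using R_derivs(1)[of "of_real y"] that by simp
    moreover have "eventually (\<lambda>z. R a n (of_real z) = of_real (Rr a n z)) (nhds y)"
      by (simp add: R_of_real)
    ultimately show "(Rr a n has_real_derivative Re (deriv (R a n) (of_real y))) (at y)"
      "Im (deriv (R a n) (of_real y)) = 0" by (rule deriv_transfer)+
  qed
  have e1: "deriv (Rr a n) y = Re (deriv (R a n) (of_real y))" if "0 < y" for y
    using DERIV_imp_deriv[OF d1[OF that]] .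
  have e2: "deriv (R a n) (of_real y) = of_real (deriv (Rr a n) y)" if "0 < y" for y
    using e1[OF that] i1[OF that] by (simp add: complex_eq_iff)
  show "deriv (Rr a n) x = Re (deriv (R a n) (of_real x))" by (rule e1[OF x])
  show "deriv (R a n) (of_real x) = of_real (deriv (Rr a n) x)" by (rule e2[OF x])
  have "(deriv (R a n) has_field_derivative deriv (deriv (R a n)) (of_real x)) (at (of_real x))"
    using R_derivs(2)[of "of_real x"] x by simp
  moreover have "eventually (\<lambda>z. deriv (R a n) (of_real z) = of_real (deriv (Rr a n) z)) (nhds x)"
  proof -
    have "eventually (\<lambda>z. z \<in> {0<..}) (nhds x)" using x by (intro eventually_nhds_in_open) auto
    thus ?thesis by eventually_elim (use e2 in auto)
  qed
  ultimately have "(deriv (Rr a n) has_real_derivative Re (deriv (deriv (R a n)) (of_real x))) (at x)"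
    by (rule deriv_transfer)
  thus "deriv (deriv (Rr a n)) x = Re (deriv (deriv (R a n)) (of_real x))" by (rule DERIV_imp_deriv)
qed

lemma Re_Qf:
  assumes "1 \<le> k"
  shows "Re (Qf a n (of_nat k)) = deriv (deriv (Rr a n)) (real k) / 2"
proof -
  have x: "0 < real k" using assms by simp
  note e = R_derivs_real[OF x, of a n]
  have "Re (Qf a n (of_nat k)) = Re (deriv (deriv (R a n)) (of_real (real k))) / 2
     + Re (\<i> * of_real pi * deriv (R a n) (of_real (real k)))"
    unfolding Qf_def by simp
  also have "Re (\<i> * of_real pi * deriv (R a n) (of_real (real k))) = 0" unfolding e(2) by simp
  finally show ?thesis using e(3) by simp
qed

lemma dd_zero:
  assumes "1 \<le> k" "k \<le> n"
  shows "deriv (deriv (Rr a n)) (real k) = 0"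
proof -
  obtain r where r: "r holomorphic_on {t. 0 < Re t}" "\<And>t. R a n t = (t - of_nat k) ^ 3 * r t"
    using R_factor[OF assms, of a] by blast
  have o: "open {t::complex. 0 < Re t}" by (simp add: open_halfspace_Re_gt)
  have kin: "(of_nat k :: complex) \<in> {t. 0 < Re t}" using assms by simp
  have "residue (\<lambda>z. R a n z / (z - of_nat k) ^ Suc 2) (of_nat k) = (deriv ^^ 2) (R a n) (of_nat k) / fact 2"
    by (rule residue_holomorphic_over_power[OF o kin R_holo])
  moreover have "residue (\<lambda>z. R a n z / (z - of_nat k) ^ Suc 2) (of_nat k) = residue r (of_nat k)"
  proof (rule residue_cong)
    show "eventually (\<lambda>z. R a n z / (z - of_nat k) ^ Suc 2 = r z) (at (of_nat k))"
      unfolding eventually_at_filter by (auto simp: r(2) numeral_3_eq_3)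
  qed simp
  moreover have "residue r (of_nat k) = 0" by (rule residue_holo[OF o kin r(1)])
  ultimately have "deriv (deriv (R a n)) (of_nat k) = 0" by (simp add: numeral_2_eq_2)
  thus ?thesis using R_derivs_real(3)[of "real k" a n] assms by simp
qed

lemma series_limit:
  assumes a6: "6 \<le> a" and n1: "1 \<le> n" and c: "0 < c" "c < 1"
  shows "(\<lambda>N. \<Sum>k\<in>{n+1..N}. Qf a n (of_nat k)) \<longlonglongrightarrow> J a n c (\<i> * of_real pi)"
proof -
  define u0 :: complex where "u0 = \<i> * of_real pi"
  define x0 where "x0 = real n * c"
  have x0: "0 < x0" "x0 < real n"
  proof -
    show "0 < x0" using n1 c unfolding x0_def by simp
    have "real n * c < real n * 1" using c n1 by (intro mult_strict_left_mono) auto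
    thus "x0 < real n" unfolding x0_def by simp
  qed
  have x0': "x0 < of_nat n + 1" using x0 by simp
  have u: "Re u0 \<le> 0" "\<bar>Im u0\<bar> \<le> 3 * pi" unfolding u0_def by auto
  obtain D where D: "D > 0" "\<And>t. x0 \<le> Re t \<Longrightarrow> norm (R a n t) \<le> D / norm t ^ 2"
    using R_bound[OF x0(1) a6, of n] by blast
  define f where "f s = Fx a n u0 (Complex x0 s)" for s
  obtain B where B: "\<And>s. norm (f s) \<le> B * inverse (1 + s^2)"
    using line_bound[OF x0(1) x0' a6 u] unfolding f_def by blast
  have cf: "continuous_on UNIV f" unfolding f_def by (rule Fx_cont_line[OF x0(1) x0'])
  have hi: "(\<lambda>x. B * inverse (1 + x^2)) integrable_on UNIV"
    using integrable_on_cmult_left[OF inv1sq_integrable, of B] by simp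
  have Lf: "(\<lambda>M::nat. integral {-real M..real M} f) \<longlonglongrightarrow> integral UNIV f"
    by (rule dom_int_limit(2)[OF cf hi B])
  define S where "S N = (\<Sum>k\<in>{n+1..N}. Qf a n (of_nat k))" for N
  have est: "eventually (\<lambda>N. norm (2 * pi * \<i> * S N + \<i> * integral {-real N..real N} f)
      \<le> 27 * pi ^ 3 * D / (real N) ^ 2 * (4 * real N + 2)) sequentially"
    unfolding eventually_sequentially
    by (rule exI[of _ n], intro allI impI, unfold S_def f_def u0_def, rule rect_est[OF x0 _ n1 D(2) D(1)])
  have e0: "(\<lambda>N::nat. 27 * pi ^ 3 * D / (real N) ^ 2 * (4 * real N + 2)) \<longlonglongrightarrow> 0"
    by real_asymp
  have z: "(\<lambda>N. 2 * pi * \<i> * S N + \<i> * integral {-real N..real N} f) \<longlonglongrightarrow> 0"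
    by (rule Lim_null_comparison[OF est e0])
  have "(\<lambda>N. ((2 * pi * \<i> * S N + \<i> * integral {-real N..real N} f) - \<i> * integral {-real N..real N} f) / (2 * pi * \<i>))
      \<longlonglongrightarrow> (0 - \<i> * integral UNIV f) / (2 * pi * \<i>)"
    by (intro tendsto_intros z Lf) simp
  moreover have "((2 * pi * \<i> * S N + \<i> * integral {-real N..real N} f) - \<i> * integral {-real N..real N} f) / (2 * pi * \<i>) = S N" for N
    by simp
  moreover have "J a n c u0 = (0 - \<i> * integral UNIV f) / (2 * pi * \<i>)"
  proof -
    have "vline_integral c (J_integrand a n u0) = - \<i> * integral UNIV f / of_nat n"
      unfolding f_def x0_def by (rule vline_eq(2)[OF a6 n1 u c])
    thus ?thesis unfolding J_def using n1 by (simp add: field_simps)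
  qed
  ultimately show ?thesis unfolding S_def u0_def by simp
qed

theorem mainTheorem4:
  fixes a n :: nat and u :: complex and c :: real
  assumes "a \<ge> 6" and "n \<ge> 1"
    and "Re u \<le> 0" and "\<bar>Im u\<bar> \<le> 3 * pi"
    and "0 < c" and "c < 1"
  shows "(\<lambda>y::real. J_integrand a n u (Complex c (- y))) integrable_on UNIV
    \<and> J a n c u = (-1) ^ n * (of_nat n) ^ 2 / (2 * \<i> * of_real pi) * (fact n) ^ (a - 6)
        * vline_integral c (\<lambda>z. (z + 1/2) * Gamma (of_nat n * z) ^ (a + 3)
             * Gamma (of_nat n - of_nat n * z + 1) ^ 3 * Gamma (of_nat n * z + 2 * of_nat n + 1) ^ 3
             / Gamma (of_nat n * z + of_nat n + 1) ^ (a + 3) * exp (of_nat n * u * z))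
    \<and> (\<lambda>k. deriv (deriv (Rr a n)) (real (Suc k)) / 2) sums Re (J a n c (\<i> * of_real pi))"
proof (intro conjI)
  show "(\<lambda>y::real. J_integrand a n u (Complex c (- y))) integrable_on UNIV"
    by (rule vline_eq(1)[OF assms])
  show "J a n c u = (-1) ^ n * (of_nat n) ^ 2 / (2 * \<i> * of_real pi) * (fact n) ^ (a - 6)
        * vline_integral c (\<lambda>z. (z + 1/2) * Gamma (of_nat n * z) ^ (a + 3)
             * Gamma (of_nat n - of_nat n * z + 1) ^ 3 * Gamma (of_nat n * z + 2 * of_nat n + 1) ^ 3
             / Gamma (of_nat n * z + of_nat n + 1) ^ (a + 3) * exp (of_nat n * u * z))"
    by (rule part1[OF assms(2)])
  define dd where "dd k = deriv (deriv (Rr a n)) (real k) / 2" for k :: nat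
  have lim: "(\<lambda>N. \<Sum>k\<in>{n+1..N}. Qf a n (of_nat k)) \<longlonglongrightarrow> J a n c (\<i> * of_real pi)"
    by (rule series_limit[OF assms(1,2,5,6)])
  have "(\<lambda>N. Re (\<Sum>k\<in>{n+1..N}. Qf a n (of_nat k))) \<longlonglongrightarrow> Re (J a n c (\<i> * of_real pi))"
    by (rule tendsto_Re[OF lim])
  moreover have "Re (\<Sum>k\<in>{n+1..N}. Qf a n (of_nat k)) = (\<Sum>k\<in>{n+1..N}. dd k)" for N
    unfolding Re_sum dd_def
  proof (rule sum.cong[OF refl])
    fix k assume "k \<in> {n+1..N}"
    hence "1 \<le> k" by simp
    thus "Re (Qf a n (of_nat k)) = deriv (deriv (Rr a n)) (real k) / 2" by (rule Re_Qf)
  qed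
  ultimately have lim2: "(\<lambda>N. \<Sum>k\<in>{n+1..N}. dd k) \<longlonglongrightarrow> Re (J a n c (\<i> * of_real pi))" by simp
  have ev: "eventually (\<lambda>M. (\<Sum>k\<in>{n+1..M}. dd k) = (\<Sum>k<M. dd (Suc k))) sequentially"
    unfolding eventually_sequentially
  proof (intro exI[of _ n] allI impI)
    fix M assume "n \<le> M"
    have "(\<Sum>k<M. dd (Suc k)) = (\<Sum>k\<in>{Suc 0..M}. dd k)" by (rule sum.atLeast1_atMost_eq[symmetric])
    also have "\<dots> = (\<Sum>k\<in>{n+1..M}. dd k)"
    proof (rule sum.mono_neutral_right)
      show "\<forall>i\<in>{Suc 0..M} - {n + 1..M}. dd i = 0"
        using assms(2) by (auto simp: dd_def intro!: dd_zero)
    qed auto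
    finally show "(\<Sum>k\<in>{n+1..M}. dd k) = (\<Sum>k<M. dd (Suc k))" ..
  qed
  have "(\<lambda>M. \<Sum>k<M. dd (Suc k)) \<longlonglongrightarrow> Re (J a n c (\<i> * of_real pi))"
    by (rule Lim_transform_eventually[OF lim2 ev])
  thus "(\<lambda>k. deriv (deriv (Rr a n)) (real (Suc k)) / 2) sums Re (J a n c (\<i> * of_real pi))"
    unfolding sums_def dd_def by simp
qed

end
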